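(* Under the standing assumptions, the set $\mathcal{D}(V)$ is open in $H$ with respect to the topology induced by the norm $\|\cdot\|_{-1}$.
   Context: Fix $T>0$, $r>0$, $\rho>0$. $L^2_{-T}:=L^2([-T,0];\mathbb{R})$, $W^{1,2}_{-T}:=W^{1,2}([-T,0];\mathbb{R})$, $H:=\mathbb{R}\times L^2_{-T}$ with elements $\eta=(\eta_0,\eta_1)$ and norm $\|\cdot\|$, $H_+:=(0,+\infty)\times L^2_{-T}$. Standing assumptions: $a\in W^{1,2}_{-T}$, $a\ge0$, $a(-T)=0$; $f_0:[0,\infty)\times\mathbb{R}\to\mathbb{R}$ jointly concave, nondecreasing in its second variable, Lipschitz with constant $C_{f_0}$, $f_0(0,y)>0$ for all $y>0$, extended to $\mathbb{R}^2$ by $f_0(x,y):=f_0(0,y)$ for $x<0$; $U_1\in C([0,\infty))\cap C^2((0,\infty))$ with $U_1'>0$, $U_1'(0^+)=+\infty$, $U_1''<0$, $U_1$ bounded; $U_2\in C((0,\infty))$ increasing, concave, bounded above, with $\int_0^\infty e^{-\rho t}U_2(e^{-C_{f_0}t})dt>-\infty$. For $\eta\in H_+$ and $c\in L^1_{loc}([0,\infty);[0,\infty))$, $x(\cdot;\eta,c)$ is the unique function $x:[-T,\infty)\to\mathbb{R}$, continuous on $[0,\infty)$, with $x=\eta_1$ a.e. on $[-T,0)$ and $x(t)=\eta_0+\int_0^t[r x(s)+f_0(x(s),\int_{-T}^0a(\xi)x(s+\xi)d\xi)-c(s)]ds$ for $t\ge 0$. Admissible controls: $\mathcal{C}(\eta):=\{c\in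 L^1_{loc}([0,\infty);[0,\infty)) : x(t;\eta,c)>0\ \forall t\ge0\}$. $J(\eta;c):=\int_0^\infty e^{-\rho t}[U_1(c(t))+U_2(x(t;\eta,c))]dt$, $V(\eta):=\sup_{c\in\mathcal{C}(\eta)}J(\eta;c)$ ($\sup\emptyset=-\infty$), $\mathcal{D}(V):=\{\eta\in H_+: V(\eta)>-\infty\}$. Operator $A(\eta_0,\eta_1):=(r\eta_0,\eta_1')$ on $\mathcal{D}(A):=\{\eta\in H:\eta_1\in W^{1,2}_{-T},\eta_1(0)=\eta_0\}$, with bounded inverse $A^{-1}(\eta_0,\eta_1)=\big(\frac{\eta_0}{r},\ s\mapsto\frac{\eta_0}{r}-\int_s^0\eta_1\big)$; $\|\eta\|_{-1}:=\|A^{-1}\eta\|$. *)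

theory Defs
  imports "HOL-Analysis.Analysis"
begin

text \<open>Elements of H = R x L^2([-T,0]) are represented by pairs (eta0, eta1) with
  eta1 a (representative) square integrable function on [-T,0].\<close>

definition inL2 :: "real \<Rightarrow> (real \<Rightarrow> real) \<Rightarrow> bool" where
  "inL2 T g \<longleftrightarrow> set_borel_measurable lborel {-T..0} g \<and>
                 set_integrable lborel {-T..0} (\<lambda>s. (g s)^2)"

definition inH :: "real \<Rightarrow> real \<times> (real \<Rightarrow> real) \<Rightarrow> bool" where
  "inH T \<eta> \<longleftrightarrow> inL2 T (snd \<eta>)"

definition inHplus :: "real \<Rightarrow> real \<times> (real \<Rightarrow> real) \<Rightarrow> bool" where
  "inHplus T \<eta> \<longleftrightarrow> fst \<eta> > 0 \<and> inL2 T (snd \<eta>)"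

definition inW12 :: "real \<Rightarrow> (real \<Rightarrow> real) \<Rightarrow> bool" where
  "inW12 T g \<longleftrightarrow> (\<exists>g'. inL2 T g' \<and>
      (\<forall>s\<in>{-T..0}. g s = g (-T) + (\<integral>u\<in>{-T..s}. g' u \<partial>lborel)))"

text \<open>Norm ||eta||_{-1} = ||A^{-1} eta||.\<close>
definition norm_m1 :: "real \<Rightarrow> real \<Rightarrow> real \<times> (real \<Rightarrow> real) \<Rightarrow> real" where
  "norm_m1 T r \<eta> = sqrt ((fst \<eta> / r)^2 +
     (\<integral>s\<in>{-T..0}. (fst \<eta> / r - (\<integral>u\<in>{s..0}. snd \<eta> u \<partial>lborel))^2 \<partial>lborel))"

definition Hminus :: "real \<times> (real \<Rightarrow> real) \<Rightarrow> real \<times> (real \<Rightarrow> real) \<Rightarrow> real \<times> (real \<Rightarrow> real)" where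
  "Hminus \<eta> \<zeta> = (fst \<eta> - fst \<zeta>, \<lambda>s. snd \<eta> s - snd \<zeta> s)"

definition Lloc_nonneg :: "(real \<Rightarrow> real) \<Rightarrow> bool" where
  "Lloc_nonneg c \<longleftrightarrow> (\<forall>t\<ge>0. c t \<ge> 0) \<and> (\<forall>t\<ge>0. set_integrable lborel {0..t} c)"

definition is_state ::
  "real \<Rightarrow> real \<Rightarrow> (real \<Rightarrow> real) \<Rightarrow> (real \<Rightarrow> real \<Rightarrow> real) \<Rightarrow>
   real \<times> (real \<Rightarrow> real) \<Rightarrow> (real \<Rightarrow> real) \<Rightarrow> (real \<Rightarrow> real) \<Rightarrow> bool" where
  "is_state T r a f0 \<eta> c x \<longleftrightarrow>
     (\<forall>t<0. x t = snd \<eta> t) \<and> continuous_on {0..} x \<and>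
     (\<forall>s\<ge>0. set_integrable lborel {-T..0} (\<lambda>\<xi>. a \<xi> * x (s + \<xi>))) \<and>
     (\<forall>t\<ge>0. set_integrable lborel {0..t}
                (\<lambda>s. r * x s + f0 (x s) (\<integral>\<xi>\<in>{-T..0}. a \<xi> * x (s + \<xi>) \<partial>lborel) - c s) \<and>
             x t = fst \<eta> + (\<integral>s\<in>{0..t}.
                (r * x s + f0 (x s) (\<integral>\<xi>\<in>{-T..0}. a \<xi> * x (s + \<xi>) \<partial>lborel) - c s) \<partial>lborel))"

definition state ::
  "real \<Rightarrow> real \<Rightarrow> (real \<Rightarrow> real) \<Rightarrow> (real \<Rightarrow> real \<Rightarrow> real) \<Rightarrow>
   real \<times> (real \<Rightarrow> real) \<Rightarrow> (real \<Rightarrow> real) \<Rightarrow> real \<Rightarrow> real" where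
  "state T r a f0 \<eta> c = (THE x. is_state T r a f0 \<eta> c x)"

definition admissible ::
  "real \<Rightarrow> real \<Rightarrow> (real \<Rightarrow> real) \<Rightarrow> (real \<Rightarrow> real \<Rightarrow> real) \<Rightarrow>
   real \<times> (real \<Rightarrow> real) \<Rightarrow> (real \<Rightarrow> real) set" where
  "admissible T r a f0 \<eta> = {c. Lloc_nonneg c \<and> (\<forall>t\<ge>0. state T r a f0 \<eta> c t > 0)}"

definition Jfun ::
  "real \<Rightarrow> real \<Rightarrow> real \<Rightarrow> (real \<Rightarrow> real) \<Rightarrow> (real \<Rightarrow> real \<Rightarrow> real) \<Rightarrow>
   (real \<Rightarrow> real) \<Rightarrow> (real \<Rightarrow> real) \<Rightarrow> real \<times> (real \<Rightarrow> real) \<Rightarrow> (real \<Rightarrow> real) \<Rightarrow> ereal" where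
  "Jfun T r \<rho> a f0 U1 U2 \<eta> c =
     (let g = (\<lambda>t. exp (-\<rho> * t) * (U1 (c t) + U2 (state T r a f0 \<eta> c t))) in
      enn2ereal (\<integral>\<^sup>+ t\<in>{0..}. ennreal (g t) \<partial>lborel) -
      enn2ereal (\<integral>\<^sup>+ t\<in>{0..}. ennreal (- g t) \<partial>lborel))"

definition Vfun ::
  "real \<Rightarrow> real \<Rightarrow> real \<Rightarrow> (real \<Rightarrow> real) \<Rightarrow> (real \<Rightarrow> real \<Rightarrow> real) \<Rightarrow>
   (real \<Rightarrow> real) \<Rightarrow> (real \<Rightarrow> real) \<Rightarrow> real \<times> (real \<Rightarrow> real) \<Rightarrow> ereal" where
  "Vfun T r \<rho> a f0 U1 U2 \<eta> = (SUP c\<in>admissible T r a f0 \<eta>. Jfun T r \<rho> a f0 U1 U2 \<eta> c)"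

definition domV ::
  "real \<Rightarrow> real \<Rightarrow> real \<Rightarrow> (real \<Rightarrow> real) \<Rightarrow> (real \<Rightarrow> real \<Rightarrow> real) \<Rightarrow>
   (real \<Rightarrow> real) \<Rightarrow> (real \<Rightarrow> real) \<Rightarrow> (real \<times> (real \<Rightarrow> real)) set" where
  "domV T r \<rho> a f0 U1 U2 = {\<eta>. inHplus T \<eta> \<and> Vfun T r \<rho> a f0 U1 U2 \<eta> > -\<infinity>}"

end

theory Submission
  imports Defs "HOL-Probability.Probability"
begin

lemma abs_le_1_sq: "\<bar>x::real\<bar> \<le> 1 + x^2"
proof -
  have "0 \<le> (\<bar>x\<bar> - 1)^2" by simp
  then show ?thesis by (simp add: power2_eq_square algebra_simps abs_mult_self_eq)
qed

lemma L2_L1: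
  assumes "inL2 T g"
  shows "set_integrable lborel {-T..0} g"
proof -
  have c: "set_integrable lborel {-T..0} (\<lambda>s. 1::real)"
    unfolding set_integrable_def by (rule borel_integrable_compact) auto
  have i: "set_integrable lborel {-T..0} (\<lambda>s. 1 + (g s)^2)"
    using c assms unfolding inL2_def by (intro set_integral_add) auto
  show ?thesis
  proof (rule set_integrable_bound[OF i])
    show "set_borel_measurable lborel {-T..0} g" using assms unfolding inL2_def by blast
    show "AE x in lborel. x \<in> {-T..0} \<longrightarrow> norm (g x) \<le> norm (1 + (g x)^2)"
      using abs_le_1_sq by (intro AE_I2) (simp add: add_nonneg_nonneg)
  qed
qed


locale dd =
  fixes T r C :: real and a a' :: "real \<Rightarrow> real" and f0 :: "real \<Rightarrow> real \<Rightarrow> real"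
  assumes T_pos: "T > 0" and r_pos: "r > 0" and C_nn: "C \<ge> 0"
    and a'_L2: "inL2 T a'"
    and a_rep: "\<And>s. s \<in> {-T..0} \<Longrightarrow> a s = (\<integral>u\<in>{-T..s}. a' u \<partial>lborel)"
    and a_nn: "\<And>s. s \<in> {-T..0} \<Longrightarrow> a s \<ge> 0"
    and f_lip: "\<And>x1 y1 x2 y2. \<bar>f0 x1 y1 - f0 x2 y2\<bar> \<le> C * (\<bar>x1 - x2\<bar> + \<bar>y1 - y2\<bar>)"
    and f_mono: "\<And>x y1 y2. y1 \<le> y2 \<Longrightarrow> f0 x y1 \<le> f0 x y2"
    and f_00: "f0 0 0 \<ge> 0"
begin

lemma a_cont: "continuous_on {-T..0} a"
proof -
  define a2 where "a2 = (\<lambda>u. indicator {-T..0} u * a' u)"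
  have i0: "integrable lborel a2"
    using L2_L1[OF a'_L2] unfolding a2_def set_integrable_def by simp
  have "set_integrable lborel {-T..b} a2" for b
    unfolding set_integrable_def by (rule integrable_mult_indicator[OF _ i0]) auto
  then have c: "continuous_on UNIV (\<lambda>b. LBINT x:{-T..b}. a2 x)"
    by (intro continuous_on_LBINT)
  have "a s = (LBINT x:{-T..s}. a2 x)" if "s \<in> {-T..0}" for s
    unfolding a_rep[OF that] a2_def
    by (intro set_lebesgue_integral_cong) (use that in auto)
  then show ?thesis
    using continuous_on_subset[OF c] by (subst continuous_on_cong[OF refl]) auto
qed

definition Ab where "Ab = (SOME A. A > 0 \<and> (\<forall>s\<in>{-T..0}. \<bar>a s\<bar> \<le> A))"

lemma Ab: "Ab > 0" "\<And>s. s \<in> {-T..0} \<Longrightarrow> \<bar>a s\<bar> \<le> Ab"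
proof -
  have "bounded (a ` {-T..0})"
    by (intro compact_imp_bounded compact_continuous_image a_cont) auto
  then obtain A where "A > 0" "\<forall>s\<in>{-T..0}. \<bar>a s\<bar> \<le> A"
    unfolding bounded_pos by auto
  then have "\<exists>A. A > 0 \<and> (\<forall>s\<in>{-T..0}. \<bar>a s\<bar> \<le> A)" by blast
  then have "Ab > 0 \<and> (\<forall>s\<in>{-T..0}. \<bar>a s\<bar> \<le> Ab)"
    unfolding Ab_def by (rule someI_ex)
  then show "Ab > 0" "\<And>s. s \<in> {-T..0} \<Longrightarrow> \<bar>a s\<bar> \<le> Ab" by auto
qed

definition aI where "aI = (\<lambda>u. indicator {-T..0} u * a u)"

lemma aI_meas[measurable]: "aI \<in> borel_measurable borel"
  unfolding aI_def
  using borel_measurable_continuous_on_indicator[OF _ a_cont] by simp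

lemma aI_bound: "\<bar>aI u\<bar> \<le> Ab"
  unfolding aI_def using Ab by (auto split: split_indicator)

definition hx where "hx g x = (\<lambda>u. indicator {-T..<0} u * g u + indicator {0..} u * x u)"

lemma hx_meas:
  assumes "inL2 T g" "continuous_on {0..} x"
  shows "hx g x \<in> borel_measurable borel"
proof -
  have "(\<lambda>u. indicator {-T..0} u * g u) \<in> borel_measurable lborel"
    using assms unfolding inL2_def set_borel_measurable_def by simp
  then have 1: "(\<lambda>u. indicator {-T..0} u * g u) \<in> borel_measurable borel" by simp
  have 2: "(\<lambda>u. indicator {0..} u * x u) \<in> borel_measurable borel"
    using borel_measurable_continuous_on_indicator[OF _ assms(2)] by simp
  have "hx g x = (\<lambda>u. indicator {-T..<0} u * (indicator {-T..0} u * g u) + indicator {0..} u * x u)"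
    unfolding hx_def by (auto split: split_indicator)
  then show ?thesis using 1 2 by simp
qed

end

context dd
begin

definition Y where "Y x s = (\<integral>\<xi>\<in>{-T..0}. a \<xi> * x (s + \<xi>) \<partial>lborel)"
definition G where "G x c s = r * x s + f0 (x s) (Y x s) - c s"

lemma f0_cont: "continuous_on UNIV (\<lambda>p. f0 (fst p) (snd p))"
proof (rule lipschitz_on_continuous_on)
  show "(2*C)-lipschitz_on UNIV (\<lambda>p. f0 (fst p) (snd p))"
  proof (rule lipschitz_onI)
    fix p q :: "real \<times> real"
    have "dist (f0 (fst p) (snd p)) (f0 (fst q) (snd q)) \<le> C * (\<bar>fst p - fst q\<bar> + \<bar>snd p - snd q\<bar>)"
      using f_lip by (simp add: dist_real_def)
    also have "\<dots> \<le> C * (dist p q + dist p q)"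
      using dist_fst_le[of p q] dist_snd_le[of p q] C_nn
      by (intro mult_left_mono add_mono) (auto simp: dist_real_def)
    finally show "dist (f0 (fst p) (snd p)) (f0 (fst q) (snd q)) \<le> 2 * C * dist p q" by simp
  qed (use C_nn in auto)
qed

lemma f0_borel[measurable]: "(\<lambda>p. f0 (fst p) (snd p)) \<in> borel_measurable borel"
  using borel_measurable_continuous_onI[OF f0_cont] by simp

lemma f0_comp_meas:
  assumes "u \<in> borel_measurable M" "v \<in> borel_measurable M"
  shows "(\<lambda>s. f0 (u s) (v s)) \<in> borel_measurable M"
proof -
  have "(\<lambda>s. (u s, v s)) \<in> borel_measurable M"
    using assms by measurable
  from measurable_compose[OF this f0_borel] show ?thesis by simp
qed

lemma Y_hx:
  assumes "\<forall>t<0. x t = g t" "s \<ge> 0"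
  shows "(\<lambda>\<xi>. indicator {-T..0} \<xi> *\<^sub>R (a \<xi> * x (s + \<xi>))) = (\<lambda>\<xi>. aI \<xi> * hx g x (s + \<xi>))"
  using assms unfolding aI_def hx_def by (auto split: split_indicator)

lemma Y_hx_int:
  assumes "\<forall>t<0. x t = g t" "s \<ge> 0"
  shows "Y x s = (\<integral>\<xi>. aI \<xi> * hx g x (s + \<xi>) \<partial>lborel)"
  unfolding Y_def set_lebesgue_integral_def Y_hx[OF assms] ..

lemma cont_bound:
  fixes x :: "real \<Rightarrow> real"
  assumes "continuous_on {0..} x" "s \<ge> 0"
  obtains B where "B \<ge> 0" "\<And>u. u \<in> {0..s} \<Longrightarrow> \<bar>x u\<bar> \<le> B"
proof -
  have "bounded (x ` {0..s})"
    by (intro compact_imp_bounded compact_continuous_image continuous_on_subset[OF assms(1)]) auto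
  then obtain B where "B > 0" "\<forall>u\<in>{0..s}. \<bar>x u\<bar> \<le> B"
    unfolding bounded_pos by auto
  then show ?thesis using that[of B] by auto
qed

definition h1 :: "(real \<Rightarrow> real) \<Rightarrow> real \<Rightarrow> real" where "h1 g = (\<lambda>u. indicator {-T..<0} u * g u)"
definition h2 :: "(real \<Rightarrow> real) \<Rightarrow> real \<Rightarrow> real" where "h2 x = (\<lambda>u. indicator {0..} u * x u)"

lemma hx_split: "hx g x = (\<lambda>u. h1 g u + h2 x u)"
  unfolding hx_def h1_def h2_def ..

lemma h1_int:
  assumes "inL2 T g"
  shows "integrable lborel (h1 g)"
proof -
  have "integrable lborel (\<lambda>u. indicator {-T..<0} u *\<^sub>R (indicator {-T..0} u *\<^sub>R g u))"
    using L2_L1[OF assms] unfolding set_integrable_def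
    by (rule integrable_mult_indicator[rotated]) auto
  then show ?thesis unfolding h1_def
    by (rule back_subst[of "integrable lborel"]) (auto split: split_indicator)
qed

lemma h1_meas[measurable]: "inL2 T g \<Longrightarrow> h1 g \<in> borel_measurable borel"
  using h1_int[of g] borel_measurable_integrable by simp

lemma h2_meas: "continuous_on {0..} x \<Longrightarrow> h2 x \<in> borel_measurable borel"
  unfolding h2_def using borel_measurable_continuous_on_indicator[of "{0..}" x] by simp

end

context dd
begin

definition good where "good g x \<longleftrightarrow> inL2 T g \<and> (\<forall>t<0. x t = g t) \<and> continuous_on {0..} x"

lemma const_int: "integrable lborel (\<lambda>\<xi>::real. indicator {p..q} \<xi> * (c::real))"
proof -
  have "integrable lborel (\<lambda>\<xi>. indicator {p..q} \<xi> *\<^sub>R c)"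
    by (rule borel_integrable_compact) (auto simp: compact_Icc)
  then show ?thesis by simp
qed

lemma int_aI_h1:
  assumes "inL2 T g"
  shows "integrable lborel (\<lambda>\<xi>. aI \<xi> * h1 g (s + \<xi>))"
proof (rule Bochner_Integration.integrable_bound[of _ "\<lambda>\<xi>. Ab * h1 g (s + \<xi>)"])
  have [measurable]: "h1 g \<in> borel_measurable borel" using assms by (rule h1_meas)
  have "integrable lborel (\<lambda>\<xi>. h1 g (s + 1 * \<xi>))"
    by (rule lborel_integrable_real_affine[OF h1_int[OF assms]]) simp
  then show "integrable lborel (\<lambda>\<xi>. Ab * h1 g (s + \<xi>))" by simp
  show "(\<lambda>\<xi>. aI \<xi> * h1 g (s + \<xi>)) \<in> borel_measurable lborel" by measurable
  show "AE x in lborel. norm (aI x * h1 g (s + x)) \<le> norm (Ab * h1 g (s + x))"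
    using aI_bound Ab(1) by (intro AE_I2) (auto simp: abs_mult intro: mult_right_mono)
qed

lemma int_aI_h2:
  assumes "continuous_on {0..} x" "s \<ge> 0" "\<And>u. u \<in> {0..s} \<Longrightarrow> \<bar>x u\<bar> \<le> B"
  shows "integrable lborel (\<lambda>\<xi>. aI \<xi> * h2 x (s + \<xi>))"
proof (rule Bochner_Integration.integrable_bound[of _ "\<lambda>\<xi>. indicator {-T..0} \<xi> * (Ab * B)"])
  have [measurable]: "h2 x \<in> borel_measurable borel" using assms by (intro h2_meas)
  show "integrable lborel (\<lambda>\<xi>. indicator {-T..0} \<xi> * (Ab * B))" by (rule const_int)
  show "(\<lambda>\<xi>. aI \<xi> * h2 x (s + \<xi>)) \<in> borel_measurable lborel" by measurable
  have "\<bar>aI \<xi> * h2 x (s + \<xi>)\<bar> \<le> \<bar>indicator {-T..0} \<xi> * (Ab * B)\<bar>" for \<xi>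
  proof (cases "\<xi> \<in> {-T..0} \<and> s + \<xi> \<ge> 0")
    case True
    then have "\<bar>x (s + \<xi>)\<bar> \<le> B" using assms(3) by auto
    moreover have "\<bar>a \<xi>\<bar> \<le> Ab" using Ab True by auto
    ultimately show ?thesis using True unfolding aI_def h2_def
      by (auto simp: abs_mult intro: mult_mono)
  next
    case False
    then show ?thesis unfolding aI_def h2_def by (auto split: split_indicator)
  qed
  then show "AE \<xi> in lborel. norm (aI \<xi> * h2 x (s + \<xi>)) \<le> norm (indicator {-T..0} \<xi> * (Ab * B))"
    by (intro AE_I2) simp
qed

lemma int_aI_hx:
  assumes "good g x" "s \<ge> 0"
  shows "integrable lborel (\<lambda>\<xi>. aI \<xi> * hx g x (s + \<xi>))"
proof -
  obtain B where "B \<ge> 0" "\<And>u. u \<in> {0..s} \<Longrightarrow> \<bar>x u\<bar> \<le> B"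
    using cont_bound[of x s] assms unfolding good_def by blast
  then have "integrable lborel (\<lambda>\<xi>. aI \<xi> * h1 g (s + \<xi>) + aI \<xi> * h2 x (s + \<xi>))"
    using assms int_aI_h1[of g s] int_aI_h2[of x s B] unfolding good_def by (intro Bochner_Integration.integrable_add) auto
  then show ?thesis unfolding hx_split by (simp add: distrib_left)
qed

lemma Y_setint:
  assumes "good g x" "s \<ge> 0"
  shows "set_integrable lborel {-T..0} (\<lambda>\<xi>. a \<xi> * x (s + \<xi>))"
  unfolding set_integrable_def using Y_hx[of x g s] assms int_aI_hx[OF assms]
  unfolding good_def by simp

definition gL1 where "gL1 g = (\<integral>u. \<bar>h1 g u\<bar> \<partial>lborel)"

lemma Y_bound:
  assumes "good g x" "s \<ge> 0" "\<And>u. u \<in> {0..s} \<Longrightarrow> \<bar>x u\<bar> \<le> B"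
  shows "\<bar>Y x s\<bar> \<le> Ab * (gL1 g + T * B)"
proof -
  have L2: "inL2 T g" and c: "continuous_on {0..} x" and e: "\<forall>t<0. x t = g t"
    using assms unfolding good_def by auto
  have i1: "integrable lborel (\<lambda>\<xi>. aI \<xi> * h1 g (s + \<xi>))" using int_aI_h1[OF L2] .
  have i2: "integrable lborel (\<lambda>\<xi>. aI \<xi> * h2 x (s + \<xi>))" using int_aI_h2[OF c assms(2,3)] .
  have "Y x s = (\<integral>\<xi>. aI \<xi> * h1 g (s + \<xi>) \<partial>lborel) + (\<integral>\<xi>. aI \<xi> * h2 x (s + \<xi>) \<partial>lborel)"
    unfolding Y_hx_int[OF e assms(2)] hx_split distrib_left
    by (rule Bochner_Integration.integral_add[OF i1 i2])
  moreover have "\<bar>\<integral>\<xi>. aI \<xi> * h1 g (s + \<xi>) \<partial>lborel\<bar> \<le> Ab * gL1 g"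
  proof -
    have ia: "integrable lborel (\<lambda>\<xi>. \<bar>h1 g (s + 1 * \<xi>)\<bar>)"
      by (rule lborel_integrable_real_affine[OF integrable_abs[OF h1_int[OF L2]]]) simp
    have "\<bar>\<integral>\<xi>. aI \<xi> * h1 g (s + \<xi>) \<partial>lborel\<bar> \<le> (\<integral>\<xi>. Ab * \<bar>h1 g (s + \<xi>)\<bar> \<partial>lborel)"
      using ia aI_bound Ab(1)
      by (intro integral_abs_bound_integral i1) (auto simp: abs_mult intro: mult_right_mono)
    also have "\<dots> = Ab * (\<integral>\<xi>. \<bar>h1 g (s + 1 * \<xi>)\<bar> \<partial>lborel)" by simp
    also have "(\<integral>\<xi>. \<bar>h1 g (s + 1 * \<xi>)\<bar> \<partial>lborel) = gL1 g"
      unfolding gL1_def using lborel_integral_real_affine[of 1 "\<lambda>u. \<bar>h1 g u\<bar>" s] by simp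
    finally show ?thesis .
  qed
  moreover have "\<bar>\<integral>\<xi>. aI \<xi> * h2 x (s + \<xi>) \<partial>lborel\<bar> \<le> Ab * (T * B)"
  proof -
    have "\<bar>\<integral>\<xi>. aI \<xi> * h2 x (s + \<xi>) \<partial>lborel\<bar> \<le> (\<integral>\<xi>. indicator {-T..0} \<xi> * (Ab * B) \<partial>lborel)"
    proof (intro integral_abs_bound_integral i2 const_int)
      fix \<xi> :: real
      show "\<bar>aI \<xi> * h2 x (s + \<xi>)\<bar> \<le> indicator {-T..0} \<xi> * (Ab * B)"
      proof (cases "\<xi> \<in> {-T..0} \<and> s + \<xi> \<ge> 0")
        case True
        then have "\<bar>x (s + \<xi>)\<bar> \<le> B" using assms(3) by auto
        moreover have "\<bar>a \<xi>\<bar> \<le> Ab" using Ab True by auto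
        ultimately show ?thesis using True unfolding aI_def h2_def
          by (auto simp: abs_mult intro: mult_mono)
      next
        case False
        then show ?thesis unfolding aI_def h2_def using Ab(1) assms(3)[of 0] assms(2)
          by (auto split: split_indicator)
      qed
    qed
    also have "\<dots> = T * (Ab * B)" using T_pos by simp
    finally show ?thesis by (simp add: algebra_simps)
  qed
  ultimately show ?thesis by (simp add: algebra_simps)
qed

end

context dd
begin

lemma Y_diff:
  assumes "good g x" "good g y" "s \<ge> 0" "\<And>u. u \<in> {0..s} \<Longrightarrow> \<bar>x u - y u\<bar> \<le> \<beta>"
  shows "\<bar>Y x s - Y y s\<bar> \<le> Ab * T * \<beta>"
proof -
  have ex: "\<forall>t<0. x t = g t" and ey: "\<forall>t<0. y t = g t"
    using assms unfolding good_def by auto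
  have ix: "integrable lborel (\<lambda>\<xi>. aI \<xi> * hx g x (s + \<xi>))" using int_aI_hx[OF assms(1,3)] .
  have iy: "integrable lborel (\<lambda>\<xi>. aI \<xi> * hx g y (s + \<xi>))" using int_aI_hx[OF assms(2,3)] .
  have eq: "Y x s - Y y s = (\<integral>\<xi>. aI \<xi> * hx g x (s + \<xi>) - aI \<xi> * hx g y (s + \<xi>) \<partial>lborel)"
    unfolding Y_hx_int[OF ex assms(3)] Y_hx_int[OF ey assms(3)]
    by (rule Bochner_Integration.integral_diff[OF ix iy, symmetric])
  have "\<bar>(\<integral>\<xi>. aI \<xi> * hx g x (s + \<xi>) - aI \<xi> * hx g y (s + \<xi>) \<partial>lborel)\<bar> \<le> (\<integral>\<xi>. indicator {-T..0} \<xi> * (Ab * \<beta>) \<partial>lborel)"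
  proof (rule integral_abs_bound_integral)
    show "integrable lborel (\<lambda>\<xi>. aI \<xi> * hx g x (s + \<xi>) - aI \<xi> * hx g y (s + \<xi>))"
      using ix iy by (rule Bochner_Integration.integrable_diff)
    show "integrable lborel (\<lambda>\<xi>. indicator {-T..0} \<xi> * (Ab * \<beta>))" by (rule const_int)
    fix \<xi> :: real
    have b0: "\<beta> \<ge> 0" using assms(4)[of 0] assms(3) by auto
    show "\<bar>aI \<xi> * hx g x (s + \<xi>) - aI \<xi> * hx g y (s + \<xi>)\<bar> \<le> indicator {-T..0} \<xi> * (Ab * \<beta>)"
    proof (cases "\<xi> \<in> {-T..0} \<and> s + \<xi> \<ge> 0")
      case True
      then have "\<bar>x (s + \<xi>) - y (s + \<xi>)\<bar> \<le> \<beta>" using assms(4) by auto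
      moreover have "\<bar>a \<xi>\<bar> \<le> Ab" using Ab True by auto
      ultimately show ?thesis using True unfolding aI_def hx_def
        by (auto simp: abs_mult right_diff_distrib[symmetric] intro: mult_mono)
    next
      case False
      then show ?thesis unfolding aI_def hx_def using Ab(1) b0
        by (auto split: split_indicator)
    qed
  qed
  also have "\<dots> = T * (Ab * \<beta>)" using T_pos by simp
  finally show ?thesis unfolding eq by (simp add: algebra_simps)
qed

definition Yh where "Yh g x = (\<lambda>s. \<integral>\<xi>. aI \<xi> * hx g x (s + \<xi>) \<partial>lborel)"

lemma Yh_meas:
  assumes "good g x"
  shows "Yh g x \<in> borel_measurable borel"
proof -
  have hm: "hx g x \<in> borel_measurable borel"
    using assms hx_meas unfolding good_def by blast
  have c1: "(\<lambda>p::real\<times>real. fst p + snd p) \<in> borel_measurable borel"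
    by (intro borel_measurable_continuous_onI continuous_intros)
  have c2: "(\<lambda>p::real\<times>real. snd p) \<in> borel_measurable borel"
    by (intro borel_measurable_continuous_onI continuous_intros)
  have m1: "(\<lambda>p::real\<times>real. hx g x (fst p + snd p)) \<in> borel_measurable borel"
    using measurable_compose[OF c1 hm] by (simp add: comp_def)
  have m2: "(\<lambda>p::real\<times>real. aI (snd p)) \<in> borel_measurable borel"
    using measurable_compose[OF c2 aI_meas] by (simp add: comp_def)
  have "(\<lambda>p::real\<times>real. aI (snd p) * hx g x (fst p + snd p)) \<in> borel_measurable borel"
    using m1 m2 by (rule borel_measurable_times[rotated])
  then have "(\<lambda>(s, \<xi>). aI \<xi> * hx g x (s + \<xi>)) \<in> borel_measurable (lborel \<Otimes>\<^sub>M lborel)"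
    unfolding lborel_prod by (simp add: case_prod_beta)
  then have "Yh g x \<in> borel_measurable lborel"
    unfolding Yh_def by (rule lborel.borel_measurable_lebesgue_integral)
  then show ?thesis by simp
qed

lemma Y_Yh: "good g x \<Longrightarrow> s \<ge> 0 \<Longrightarrow> Y x s = Yh g x s"
  unfolding Yh_def good_def using Y_hx_int by blast

lemma f0_bound: "\<bar>f0 x y\<bar> \<le> \<bar>f0 0 0\<bar> + C * (\<bar>x\<bar> + \<bar>y\<bar>)"
  using f_lip[of x y 0 0] by simp

lemma G_int:
  assumes "good g x" "t \<ge> 0" "set_integrable lborel {0..t} c"
  shows "set_integrable lborel {0..t} (G x c)"
proof -
  obtain B where B: "B \<ge> 0" "\<And>u. u \<in> {0..t} \<Longrightarrow> \<bar>x u\<bar> \<le> B"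
    using cont_bound[of x t] assms unfolding good_def by blast
  define K where "K = r * B + \<bar>f0 0 0\<bar> + C * (B + Ab * (gL1 g + T * B))"
  have ic: "set_integrable lborel {0..t} (\<lambda>_. K)"
    unfolding set_integrable_def by (rule borel_integrable_compact) (auto simp: compact_Icc)
  have "set_integrable lborel {0..t} (\<lambda>s. r * x s + f0 (x s) (Y x s))"
  proof (rule set_integrable_bound[OF ic])
    have [measurable]: "h2 x \<in> borel_measurable borel" "Yh g x \<in> borel_measurable borel"
      using assms h2_meas Yh_meas unfolding good_def by auto
    have m: "(\<lambda>s. f0 (h2 x s) (Yh g x s)) \<in> borel_measurable borel"
      by (rule f0_comp_meas) auto
    have "(\<lambda>s. indicator {0..t} s *\<^sub>R (r * x s + f0 (x s) (Y x s))) =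
          (\<lambda>s. indicator {0..t} s * (r * h2 x s + f0 (h2 x s) (Yh g x s)))"
      using Y_Yh[OF assms(1)] unfolding h2_def by (auto split: split_indicator)
    then show "set_borel_measurable lborel {0..t} (\<lambda>s. r * x s + f0 (x s) (Y x s))"
      unfolding set_borel_measurable_def using m by simp
    show "AE s in lborel. s \<in> {0..t} \<longrightarrow> norm (r * x s + f0 (x s) (Y x s)) \<le> norm K"
    proof (intro AE_I2 impI)
      fix s assume s: "s \<in> {0..t}"
      have bx: "\<bar>x s\<bar> \<le> B" using B s by auto
      have by1: "\<bar>Y x s\<bar> \<le> Ab * (gL1 g + T * B)"
        using s B by (intro Y_bound[OF assms(1)]) auto
      have "\<bar>f0 (x s) (Y x s)\<bar> \<le> \<bar>f0 0 0\<bar> + C * (B + Ab * (gL1 g + T * B))"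
        using f0_bound[of "x s" "Y x s"] bx by1 C_nn
        by (smt (verit, best) mult_left_mono)
      moreover have "\<bar>r * x s\<bar> \<le> r * B" using bx r_pos by (simp add: abs_mult)
      ultimately have "\<bar>r * x s + f0 (x s) (Y x s)\<bar> \<le> K" unfolding K_def by linarith
      then show "norm (r * x s + f0 (x s) (Y x s)) \<le> norm K" by simp
    qed
  qed
  then show ?thesis unfolding G_def using assms(3) by (rule set_integral_diff(1))
qed

definition Lc where "Lc = r + C + C * Ab * T"

lemma Lc_pos: "Lc > 0"
  unfolding Lc_def using r_pos C_nn Ab(1) T_pos by (simp add: add_pos_nonneg)

lemma G_lip:
  assumes "good g x" "good g y" "s \<ge> 0" "\<And>u. u \<in> {0..s} \<Longrightarrow> \<bar>x u - y u\<bar> \<le> \<beta>"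
  shows "\<bar>G x c s - G y c s\<bar> \<le> Lc * \<beta>"
proof -
  have yd: "\<bar>Y x s - Y y s\<bar> \<le> Ab * T * \<beta>" by (rule Y_diff[OF assms])
  have xd: "\<bar>x s - y s\<bar> \<le> \<beta>" using assms(3,4) by auto
  have "\<bar>G x c s - G y c s\<bar> = \<bar>r * (x s - y s) + (f0 (x s) (Y x s) - f0 (y s) (Y y s))\<bar>"
    unfolding G_def by (simp add: algebra_simps)
  also have "\<dots> \<le> r * \<bar>x s - y s\<bar> + C * (\<bar>x s - y s\<bar> + \<bar>Y x s - Y y s\<bar>)"
  proof -
    have "\<bar>r * (x s - y s) + (f0 (x s) (Y x s) - f0 (y s) (Y y s))\<bar> \<le> \<bar>r * (x s - y s)\<bar> + \<bar>f0 (x s) (Y x s) - f0 (y s) (Y y s)\<bar>"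
      by (rule abs_triangle_ineq)
    moreover have "\<bar>r * (x s - y s)\<bar> = r * \<bar>x s - y s\<bar>" using r_pos by (simp add: abs_mult)
    ultimately show ?thesis using f_lip[of "x s" "Y x s" "y s" "Y y s"] by linarith
  qed
  also have "\<dots> \<le> r * \<beta> + C * (\<beta> + Ab * T * \<beta>)"
    using xd yd r_pos C_nn by (intro add_mono mult_left_mono) auto
  also have "\<dots> = Lc * \<beta>" unfolding Lc_def by (simp add: algebra_simps)
  finally show ?thesis .
qed

end

lemma cont_local:
  fixes f :: "real \<Rightarrow> real"
  assumes "\<And>N. N \<ge> 0 \<Longrightarrow> continuous_on {0..N} f"
  shows "continuous_on {0..} f"
  unfolding continuous_on_eq_continuous_within
proof
  fix t :: real assume t: "t \<in> {0..}"
  have "continuous (at t within {0..t+1}) f"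
    using assms[of "t+1"] t unfolding continuous_on_eq_continuous_within by auto
  moreover have "at t within {0..} = at t within {0..t+1}"
    by (rule at_within_nhd[of t "{..<t+1}"]) auto
  ultimately show "continuous (at t within {0..}) f" by simp
qed

context dd
begin

definition cint where "cint c \<longleftrightarrow> (\<forall>t\<ge>0. set_integrable lborel {0..t} c)"

definition Phi where
  "Phi g ez c x = (\<lambda>t. if t < 0 then g t else ez + (\<integral>s\<in>{0..t}. G x c s \<partial>lborel))"

lemma Phi_good:
  assumes "good g x" "cint c"
  shows "good g (Phi g ez c x)"
proof -
  have c0: "continuous_on UNIV (\<lambda>b. LBINT s:{0..b}. G x c s)"
    using G_int[OF assms(1)] assms(2) unfolding cint_def by (intro continuous_on_LBINT) auto
  have "continuous_on {0..} (\<lambda>b. ez + (LBINT s:{0..b}. G x c s))"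
    using continuous_on_subset[OF c0, of "{0..}"] by (intro continuous_on_add continuous_on_const) auto
  then have "continuous_on {0..} (Phi g ez c x)"
    by (rule continuous_on_cong[THEN iffD1, rotated 2]) (auto simp: Phi_def)
  then show ?thesis using assms(1) unfolding good_def Phi_def by auto
qed

lemma Phi_step:
  assumes "good g x" "good g y" "cint c" "t \<ge> 0"
    and B: "\<And>u s. 0 \<le> u \<Longrightarrow> u \<le> s \<Longrightarrow> s \<le> t \<Longrightarrow> B u \<le> B s"
    and Bi: "set_integrable lborel {0..t} B"
    and xy: "\<And>s. s \<in> {0..t} \<Longrightarrow> \<bar>x s - y s\<bar> \<le> B s"
  shows "\<bar>Phi g ez c x t - Phi g ez c y t\<bar> \<le> (\<integral>s\<in>{0..t}. Lc * B s \<partial>lborel)"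
proof -
  have ic: "set_integrable lborel {0..t} c" using assms(3,4) unfolding cint_def by auto
  have ix: "set_integrable lborel {0..t} (G x c)"
    using G_int[OF assms(1,4) ic] .
  have iy: "set_integrable lborel {0..t} (G y c)"
    using G_int[OF assms(2,4) ic] .
  have iB: "set_integrable lborel {0..t} (\<lambda>s. Lc * B s)" using Bi by auto
  have iD: "set_integrable lborel {0..t} (\<lambda>s. G x c s - G y c s)" using ix iy by auto
  have iD': "set_integrable lborel {0..t} (\<lambda>s. -(G x c s - G y c s))"
    using set_integral_diff(1)[OF iy ix] by simp
  have pt: "\<bar>G x c s - G y c s\<bar> \<le> Lc * B s" if s: "s \<in> {0..t}" for s
    by (rule G_lip[OF assms(1,2)]) (use s xy B in \<open>auto intro: order_trans\<close>)
  have eq: "Phi g ez c x t - Phi g ez c y t = (\<integral>s\<in>{0..t}. G x c s - G y c s \<partial>lborel)"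
    unfolding Phi_def using assms(4) set_integral_diff(2)[OF ix iy] by auto
  have 1: "(\<integral>s\<in>{0..t}. G x c s - G y c s \<partial>lborel) \<le> (\<integral>s\<in>{0..t}. Lc * B s \<partial>lborel)"
    using pt by (intro set_integral_mono[OF iD iB]) (auto simp: abs_le_iff)
  have 2: "(\<integral>s\<in>{0..t}. -(G x c s - G y c s) \<partial>lborel) \<le> (\<integral>s\<in>{0..t}. Lc * B s \<partial>lborel)"
    using pt by (intro set_integral_mono[OF iD' iB]) (auto simp: abs_le_iff)
  have "(\<integral>s\<in>{0..t}. -(G x c s - G y c s) \<partial>lborel) = - (\<integral>s\<in>{0..t}. G x c s - G y c s \<partial>lborel)"
    by (rule set_integral_uminus[OF iD])
  then show ?thesis unfolding eq using 1 2 by linarith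
qed

lemma int_pow:
  assumes "t \<ge> 0"
  shows "(\<integral>s\<in>{0..t}. Lc * (M * (Lc * s)^n / fact n) \<partial>lborel) = M * (Lc * t)^(Suc n) / fact (Suc n)"
proof -
  have "(\<integral>s\<in>{0..t}. Lc * (M * (Lc * s)^n / fact n) \<partial>lborel) =
        (\<integral>s. s^n * indicator {0..t} s \<partial>lborel) * (Lc^(Suc n) * M / fact n)"
    unfolding set_lebesgue_integral_def
    apply (subst integral_mult_left_zero[symmetric])
    apply (rule Bochner_Integration.integral_cong)
    by (auto simp: power_mult_distrib mult_ac split: split_indicator)
  also have "\<dots> = t^Suc n / Suc n * (Lc^(Suc n) * M / fact n)"
    using integral_power[of 0 t n] assms by simp
  also have "\<dots> = M * (Lc * t)^(Suc n) / fact (Suc n)"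
    by (simp add: power_mult_distrib field_simps)
  finally show ?thesis .
qed

lemma iter_bound:
  assumes gu: "\<And>n. good g (u n)" and gv: "\<And>n. good g (v n)"
    and su: "\<And>n. u (Suc n) = Phi g ez c (u n)" and sv: "\<And>n. v (Suc n) = Phi g ez c (v n)"
    and c: "cint c" and M: "M \<ge> 0" and b0: "\<And>t. t \<in> {0..N} \<Longrightarrow> \<bar>u 0 t - v 0 t\<bar> \<le> M"
  shows "t \<in> {0..N} \<Longrightarrow> \<bar>u n t - v n t\<bar> \<le> M * (Lc * t)^n / fact n"
proof (induction n arbitrary: t)
  case 0
  then show ?case using b0 by simp
next
  case (Suc n)
  have t: "t \<ge> 0" using Suc.prems by auto
  have "\<bar>Phi g ez c (u n) t - Phi g ez c (v n) t\<bar> \<le> (\<integral>s\<in>{0..t}. Lc * (M * (Lc * s)^n / fact n) \<partial>lborel)"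
  proof (rule Phi_step[OF gu gv c t])
    show "M * (Lc * u') ^ n / fact n \<le> M * (Lc * s) ^ n / fact n" if "0 \<le> u'" "u' \<le> s" "s \<le> t" for u' s
      using that Lc_pos M by (intro divide_right_mono mult_left_mono power_mono) auto
    show "set_integrable lborel {0..t} (\<lambda>s. M * (Lc * s) ^ n / fact n)"
      unfolding set_integrable_def by (rule borel_integrable_compact) (auto simp: compact_Icc intro!: continuous_intros)
    show "\<bar>u n s - v n s\<bar> \<le> M * (Lc * s) ^ n / fact n" if "s \<in> {0..t}" for s
      using that Suc.prems by (intro Suc.IH) auto
  qed
  then show ?case unfolding su sv int_pow[OF t] .
qed

lemma pow_fact_lim: "(\<lambda>n. M * (z::real)^n / fact n) \<longlonglongrightarrow> 0"
proof -
  have "summable (\<lambda>n. inverse (fact n) * z^n)" by (rule summable_exp)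
  then have "(\<lambda>n. inverse (fact n) * z^n) \<longlonglongrightarrow> 0" by (rule summable_LIMSEQ_zero)
  then have "(\<lambda>n. M * (inverse (fact n) * z^n)) \<longlonglongrightarrow> M * 0" by (intro tendsto_mult tendsto_const)
  then show ?thesis by (simp add: field_simps)
qed

lemma uniq:
  assumes "good g x" "good g y" "cint c" "x = Phi g ez c x" "y = Phi g ez c y"
  shows "x = y"
proof
  fix t
  show "x t = y t"
  proof (cases "t < 0")
    case True then show ?thesis using assms(1,2) unfolding good_def by auto
  next
    case False
    then have t: "t \<ge> 0" by simp
    have cc: "continuous_on {0..} (\<lambda>s. x s - y s)"
      using assms(1,2) unfolding good_def by (intro continuous_on_diff) auto
    obtain M where M: "M \<ge> 0" "\<And>s. s \<in> {0..t} \<Longrightarrow> \<bar>x s - y s\<bar> \<le> M"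
      using cont_bound[OF cc t] by blast
    have b: "\<bar>x t - y t\<bar> \<le> M * (Lc * t)^n / fact n" for n
      using iter_bound[where u="\<lambda>_. x" and v="\<lambda>_. y" and M=M and N=t and t=t and n=n and g=g and ez=ez and c=c] assms M t by auto
    have "\<bar>x t - y t\<bar> \<le> 0"
      using b by (intro tendsto_le[OF trivial_limit_sequentially pow_fact_lim[of M "Lc * t"] tendsto_const]) auto
    then show ?thesis by simp
  qed
qed

end

context dd
begin

primrec pic :: "(real \<Rightarrow> real) \<Rightarrow> real \<Rightarrow> (real \<Rightarrow> real) \<Rightarrow> nat \<Rightarrow> real \<Rightarrow> real" where
  "pic g ez c 0 = (\<lambda>t. if t < 0 then g t else ez)"
| "pic g ez c (Suc n) = Phi g ez c (pic g ez c n)"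

lemma pic_good:
  assumes "inL2 T g" "cint c"
  shows "good g (pic g ez c n)"
proof (induction n)
  case 0
  have "continuous_on {0..} (\<lambda>t::real. ez)" by (rule continuous_on_const)
  then have "continuous_on {0..} (\<lambda>t. if t < 0 then g t else ez)"
    by (rule continuous_on_cong[THEN iffD1, rotated 2]) auto
  then show ?case using assms unfolding good_def by auto
next
  case (Suc n)
  then show ?case using Phi_good[OF _ assms(2)] by simp
qed

lemma const_setint: "set_integrable lborel {0..t::real} (\<lambda>_. k::real)"
  unfolding set_integrable_def by (rule borel_integrable_compact) (auto simp: compact_Icc)

lemma exist:
  assumes g: "inL2 T g" and c: "cint c"
  shows "\<exists>x. good g x \<and> x = Phi g ez c x"
proof -
  define p where "p = pic g ez c"
  have gp: "good g (p n)" for n unfolding p_def using pic_good[OF g c] .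
  define d where "d i t = p (Suc i) t - p i t" for i t
  define X where "X t = (if t < 0 then g t else ez + (\<Sum>i. d i t))" for t
  have pS: "p n t = ez + (\<Sum>i<n. d i t)" if "t \<ge> 0" for n t
  proof -
    have "(\<Sum>i<n. d i t) = p n t - p 0 t" unfolding d_def by (rule sum_lessThan_telescope)
    moreover have "p 0 t = ez" using that by (simp add: p_def)
    ultimately show ?thesis by simp
  qed
  have ul: "uniform_limit {0..N} p X sequentially" if N: "N \<ge> 0" for N
  proof -
    have cc: "continuous_on {0..} (\<lambda>t. p 1 t - p 0 t)"
      using gp[of 1] gp[of 0] unfolding good_def by (intro continuous_on_diff) auto
    obtain M where M: "M \<ge> 0" "\<And>t. t \<in> {0..N} \<Longrightarrow> \<bar>p 1 t - p 0 t\<bar> \<le> M"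
      using cont_bound[OF cc N] by blast
    have bd: "\<bar>d n t\<bar> \<le> M * (Lc * N)^n / fact n" if t: "t \<in> {0..N}" for n t
    proof -
      have su: "\<And>n. p (Suc (Suc n)) = Phi g ez c (p (Suc n))" and sv: "\<And>n. p (Suc n) = Phi g ez c (p n)"
        by (simp_all add: p_def)
      have "\<bar>p (Suc n) t - p n t\<bar> \<le> M * (Lc * t)^n / fact n"
        using iter_bound[where u="\<lambda>n. p (Suc n)" and v=p and M=M and N=N and t=t and n=n and g=g and ez=ez and c=c,
          OF gp gp su sv c M(1)] M(2) t by auto
      also have "\<dots> \<le> M * (Lc * N)^n / fact n"
        using t Lc_pos M by (intro divide_right_mono mult_left_mono power_mono) auto
      finally show ?thesis unfolding d_def .
    qed
    have sm: "summable (\<lambda>n. M * (Lc * N)^n / fact n)"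
      using summable_mult[OF summable_exp[of "Lc * N"], of M] by (simp add: field_simps)
    have W: "uniform_limit {0..N} (\<lambda>n t. \<Sum>i<n. d i t) (\<lambda>t. \<Sum>i. d i t) sequentially"
      by (rule Weierstrass_m_test[OF _ sm]) (use bd in auto)
    show ?thesis
      unfolding uniform_limit_iff
    proof (intro allI impI)
      fix e :: real assume e: "e > 0"
      have "\<forall>\<^sub>F n in sequentially. \<forall>t\<in>{0..N}. dist (\<Sum>i<n. d i t) (\<Sum>i. d i t) < e"
        using W e unfolding uniform_limit_iff by blast
      then show "\<forall>\<^sub>F n in sequentially. \<forall>t\<in>{0..N}. dist (p n t) (X t) < e"
        by eventually_elim (auto simp: pS X_def dist_real_def)
    qed
  qed
  have contX: "continuous_on {0..} X"
  proof (rule cont_local)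
    fix N :: real assume N: "N \<ge> 0"
    show "continuous_on {0..N} X"
    proof (rule uniform_limit_theorem[OF _ ul[OF N]])
      show "\<forall>\<^sub>F n in sequentially. continuous_on {0..N} (p n)"
      proof (intro always_eventually allI)
        fix n show "continuous_on {0..N} (p n)"
          using gp[of n] unfolding good_def by (meson atLeastAtMost_iff atLeast_iff continuous_on_subset subsetI)
      qed
    qed simp
  qed
  have gX: "good g X" using g contX unfolding good_def X_def by auto
  have fixp: "X t = Phi g ez c X t" for t
  proof (cases "t < 0")
    case True then show ?thesis by (simp add: X_def Phi_def)
  next
    case False
    then have t: "t \<ge> 0" by simp
    have l1: "(\<lambda>n. p (Suc n) t) \<longlonglongrightarrow> X t"
      using tendsto_uniform_limitI[OF ul[OF t], of t] t by (intro LIMSEQ_Suc) auto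
    have l2: "(\<lambda>n. p (Suc n) t) \<longlonglongrightarrow> Phi g ez c X t"
    proof (rule tendstoI)
      fix e :: real assume e: "e > 0"
      define e' where "e' = e / (Lc * (t + 1))"
      have e': "e' > 0" unfolding e'_def using e Lc_pos t by auto
      have "\<forall>\<^sub>F n in sequentially. \<forall>s\<in>{0..t}. dist (p n s) (X s) < e'"
        using ul[OF t] e' unfolding uniform_limit_iff by blast
      then show "\<forall>\<^sub>F n in sequentially. dist (p (Suc n) t) (Phi g ez c X t) < e"
      proof eventually_elim
        case (elim n)
        have "\<bar>Phi g ez c (p n) t - Phi g ez c X t\<bar> \<le> (\<integral>s\<in>{0..t}. Lc * e' \<partial>lborel)"
          by (rule Phi_step[OF gp gX c t _ const_setint]) (use elim in \<open>auto simp: dist_real_def intro: less_imp_le\<close>)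
        also have "\<dots> = t * (Lc * e')" using t by (simp add: set_integral_const)
        also have "\<dots> < e"
        proof -
          have "t * (Lc * e') = e * (t / (t + 1))"
          proof -
            have "Lc \<noteq> 0" "t + 1 \<noteq> 0" "Lc + t * Lc \<noteq> 0"
              using Lc_pos t add_pos_nonneg[of Lc "t * Lc"] by auto
            then show ?thesis unfolding e'_def by (simp add: field_split_simps)
          qed
          also have "\<dots> < e * 1" using e t by (intro mult_strict_left_mono) auto
          finally show ?thesis by simp
        qed
        finally show ?case by (simp add: p_def dist_real_def)
      qed
    qed
    show ?thesis using LIMSEQ_unique[OF l1 l2] .
  qed
  show ?thesis using gX fixp by blast
qed

end

context dd
begin

lemma is_state_iff:
  assumes g: "inL2 T (snd \<eta>)" and c: "cint c"
  shows "is_state T r a f0 \<eta> c x \<longleftrightarrow> good (snd \<eta>) x \<and> x = Phi (snd \<eta>) (fst \<eta>) c x"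
proof
  assume st: "is_state T r a f0 \<eta> c x"
  then have gx: "good (snd \<eta>) x" using g unfolding is_state_def good_def by auto
  have "x t = Phi (snd \<eta>) (fst \<eta>) c x t" for t
    using st unfolding is_state_def Phi_def G_def Y_def by (cases "t < 0") auto
  then show "good (snd \<eta>) x \<and> x = Phi (snd \<eta>) (fst \<eta>) c x" using gx by auto
next
  assume h: "good (snd \<eta>) x \<and> x = Phi (snd \<eta>) (fst \<eta>) c x"
  then have gx: "good (snd \<eta>) x" and fx: "x = Phi (snd \<eta>) (fst \<eta>) c x" by auto
  have i: "set_integrable lborel {0..t} (G x c)" if "t \<ge> 0" for t
    using G_int[OF gx that] c that unfolding cint_def by auto
  have e: "x t = fst \<eta> + (\<integral>s\<in>{0..t}. G x c s \<partial>lborel)" if "t \<ge> 0" for t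
    using fun_cong[OF fx, of t] that unfolding Phi_def by auto
  show "is_state T r a f0 \<eta> c x"
    unfolding is_state_def
    using gx Y_setint[OF gx] i e unfolding good_def G_def Y_def by auto
qed

lemma state_char:
  assumes g: "inL2 T (snd \<eta>)" and c: "cint c"
  shows "is_state T r a f0 \<eta> c (state T r a f0 \<eta> c)"
    and "is_state T r a f0 \<eta> c x \<Longrightarrow> state T r a f0 \<eta> c = x"
proof -
  have ex: "\<exists>!x. is_state T r a f0 \<eta> c x"
  proof -
    obtain x where "good (snd \<eta>) x \<and> x = Phi (snd \<eta>) (fst \<eta>) c x"
      using exist[OF g c] by blast
    moreover have "y = x" if "is_state T r a f0 \<eta> c y" "is_state T r a f0 \<eta> c x" for x y
      using that uniq[OF _ _ c] unfolding is_state_iff[OF g c] by blast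
    ultimately show ?thesis using is_state_iff[OF g c] by blast
  qed
  show "is_state T r a f0 \<eta> c (state T r a f0 \<eta> c)"
    unfolding state_def using theI'[OF ex] .
  show "state T r a f0 \<eta> c = x" if "is_state T r a f0 \<eta> c x"
  proof -
    have "is_state T r a f0 \<eta> c (THE x. is_state T r a f0 \<eta> c x)" using theI'[OF ex] .
    then show ?thesis unfolding state_def using ex that by (metis (no_types, lifting))
  qed
qed

end

context dd
begin

definition d2 :: "(real \<Rightarrow> real) \<Rightarrow> (real \<Rightarrow> real) \<Rightarrow> real \<Rightarrow> real" where
  "d2 g1 g2 = (\<lambda>u. indicator {-T..0} u * (g1 u - g2 u))"

lemma d2_int:
  assumes "inL2 T g1" "inL2 T g2"
  shows "integrable lborel (d2 g1 g2)"
proof -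
  have "integrable lborel (\<lambda>u. indicator {-T..0} u *\<^sub>R g1 u - indicator {-T..0} u *\<^sub>R g2 u)"
    using L2_L1[OF assms(1)] L2_L1[OF assms(2)] unfolding set_integrable_def by auto
  then show ?thesis unfolding d2_def by (simp add: right_diff_distrib)
qed

lemma d2_meas: "inL2 T g1 \<Longrightarrow> inL2 T g2 \<Longrightarrow> d2 g1 g2 \<in> borel_measurable borel"
proof -
  assume "inL2 T g1" "inL2 T g2"
  then have "d2 g1 g2 \<in> borel_measurable lborel" using d2_int borel_measurable_integrable by blast
  then show ?thesis by simp
qed

definition RR where "RR g1 g2 v = (\<integral>u. indicator {v..<0} u * d2 g1 g2 u \<partial>lborel)"

lemma RR_meas:
  assumes "inL2 T g1" "inL2 T g2"
  shows "RR g1 g2 \<in> borel_measurable borel"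
proof -
  define S where "S = {p::real\<times>real. fst p \<le> snd p} \<inter> {p. snd p < 0}"
  have "closed {p::real\<times>real. fst p \<le> snd p}"
    by (intro closed_Collect_le continuous_intros)
  moreover have "open {p::real\<times>real. snd p < 0}"
    by (intro open_Collect_less continuous_intros)
  ultimately have Sb: "S \<in> sets borel" unfolding S_def by auto
  have m1: "(\<lambda>p::real\<times>real. indicator S p :: real) \<in> borel_measurable borel"
    using Sb by (rule borel_measurable_indicator)
  have c2: "(\<lambda>p::real\<times>real. snd p) \<in> borel_measurable borel"
    by (intro borel_measurable_continuous_onI continuous_intros)
  have m2: "(\<lambda>p::real\<times>real. d2 g1 g2 (snd p)) \<in> borel_measurable borel"
    using measurable_compose[OF c2 d2_meas[OF assms]] by (simp add: comp_def)
  have "(\<lambda>p::real\<times>real. indicator S p * d2 g1 g2 (snd p)) \<in> borel_measurable borel"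
    using m1 m2 by (rule borel_measurable_times)
  moreover have "(\<lambda>p::real\<times>real. indicator S p * d2 g1 g2 (snd p)) = (\<lambda>(v, u). indicator {v..<0} u * d2 g1 g2 u)"
    unfolding S_def by (auto simp: fun_eq_iff split: split_indicator)
  ultimately have "(\<lambda>(v, u). indicator {v..<0} u * d2 g1 g2 u) \<in> borel_measurable (lborel \<Otimes>\<^sub>M lborel)"
    unfolding lborel_prod by simp
  then have "RR g1 g2 \<in> borel_measurable lborel"
    unfolding RR_def by (rule lborel.borel_measurable_lebesgue_integral)
  then show ?thesis by simp
qed

definition dL1 where "dL1 g1 g2 = (\<integral>u. \<bar>d2 g1 g2 u\<bar> \<partial>lborel)"

lemma RR_bound:
  assumes "inL2 T g1" "inL2 T g2"
  shows "\<bar>RR g1 g2 v\<bar> \<le> dL1 g1 g2"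
  unfolding RR_def dL1_def
proof (rule integral_abs_bound_integral)
  show "integrable lborel (\<lambda>u. indicator {v..<0} u * d2 g1 g2 u)"
    using integrable_mult_indicator[OF _ d2_int[OF assms], of "{v..<0}"] by simp
  show "integrable lborel (\<lambda>u. \<bar>d2 g1 g2 u\<bar>)" using d2_int[OF assms] by auto
qed (auto split: split_indicator)

definition a2 where "a2 = (\<lambda>w. indicator {-T..0} w * a' w)"

lemma a2_int: "integrable lborel a2"
  using L2_L1[OF a'_L2] unfolding a2_def set_integrable_def by simp

lemma a2_meas: "a2 \<in> borel_measurable borel"
proof -
  have "a2 \<in> borel_measurable lborel" using a2_int borel_measurable_integrable by blast
  then show ?thesis by simp
qed

lemma a_a2: "\<xi> \<in> {-T..0} \<Longrightarrow> a \<xi> = (\<integral>w. indicator {..\<xi>} w * a2 w \<partial>lborel)"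
  unfolding a_rep set_lebesgue_integral_def a2_def
  by (intro Bochner_Integration.integral_cong) (auto split: split_indicator)

lemma pair_meas:
  fixes u v :: "real \<Rightarrow> real"
  assumes "u \<in> borel_measurable borel" "v \<in> borel_measurable borel"
  shows "(\<lambda>p::real\<times>real. u (fst p)) \<in> borel_measurable borel" "(\<lambda>p::real\<times>real. v (snd p)) \<in> borel_measurable borel"
proof -
  have c1: "(\<lambda>p::real\<times>real. fst p) \<in> borel_measurable borel"
    by (intro borel_measurable_continuous_onI continuous_intros)
  have c2: "(\<lambda>p::real\<times>real. snd p) \<in> borel_measurable borel"
    by (intro borel_measurable_continuous_onI continuous_intros)
  show "(\<lambda>p::real\<times>real. u (fst p)) \<in> borel_measurable borel"
    using measurable_compose[OF c1 assms(1)] by (simp add: comp_def)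
  show "(\<lambda>p::real\<times>real. v (snd p)) \<in> borel_measurable borel"
    using measurable_compose[OF c2 assms(2)] by (simp add: comp_def)
qed

lemma D_fubini:
  assumes g1: "inL2 T g1" and g2: "inL2 T g2" and s: "s \<ge> 0"
  shows "(\<integral>\<xi>. aI \<xi> * h1 (\<lambda>u. g1 u - g2 u) (s + \<xi>) \<partial>lborel) = (\<integral>w. a2 w * RR g1 g2 (w + s) \<partial>lborel)"
proof -
  define d where "d = d2 g1 g2"
  have di: "integrable lborel d" unfolding d_def using d2_int[OF g1 g2] .
  have dm: "d \<in> borel_measurable borel" unfolding d_def using d2_meas[OF g1 g2] .
  define \<phi> where "\<phi> \<xi> = indicator {-T..0} \<xi> * (indicator {-T..<0} (s + \<xi>) * d (s + \<xi>))" for \<xi>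
  define f where "f \<xi> w = \<phi> \<xi> * (indicator {..\<xi>} w * a2 w)" for \<xi> w
  have \<phi>i: "integrable lborel \<phi>"
  proof -
    have ii: "integrable lborel (\<lambda>\<xi>. (indicator {-T..<0} (s + 1 * \<xi>) * d (s + 1 * \<xi>)))"
      by (rule lborel_integrable_real_affine[OF integrable_mult_indicator[OF _ di, of "{-T..<0}", simplified]]) simp
    show ?thesis unfolding \<phi>_def using integrable_mult_indicator[of "{-T..0}" lborel, OF _ ii] by simp
  qed
  have \<phi>m: "\<phi> \<in> borel_measurable borel"
    using borel_measurable_integrable[OF \<phi>i] by simp
  have fm: "(\<lambda>p. f (fst p) (snd p)) \<in> borel_measurable (lborel \<Otimes>\<^sub>M lborel)"
  proof -
    define S where "S = {p::real\<times>real. snd p \<le> fst p}"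
    have "closed S" unfolding S_def by (intro closed_Collect_le continuous_intros)
    then have m1: "(\<lambda>p::real\<times>real. indicator S p :: real) \<in> borel_measurable borel"
      by (intro borel_measurable_indicator) auto
    have "(\<lambda>p::real\<times>real. \<phi> (fst p) * (indicator S p * a2 (snd p))) \<in> borel_measurable borel"
      using pair_meas[OF \<phi>m a2_meas] m1 by (intro borel_measurable_times) auto
    moreover have "(\<lambda>p::real\<times>real. \<phi> (fst p) * (indicator S p * a2 (snd p))) = (\<lambda>p. f (fst p) (snd p))"
      unfolding S_def f_def by (auto simp: fun_eq_iff split: split_indicator)
    ultimately show ?thesis unfolding lborel_prod by simp
  qed
  have a2L: "integrable lborel (\<lambda>w. \<bar>a2 w\<bar>)" using a2_int by auto
  have inner1: "(\<integral>w. f \<xi> w \<partial>lborel) = \<phi> \<xi> * (\<integral>w. indicator {..\<xi>} w * a2 w \<partial>lborel)" for \<xi>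
    unfolding f_def by simp
  define aL where "aL = (\<integral>w. \<bar>a2 w\<bar> \<partial>lborel)"
  have integ1: "integrable lborel (\<lambda>\<xi>. \<integral>w. norm (f \<xi> w) \<partial>lborel)"
  proof (rule Bochner_Integration.integrable_bound[of _ "\<lambda>\<xi>. \<bar>\<phi> \<xi>\<bar> * aL"])
    show "integrable lborel (\<lambda>\<xi>. \<bar>\<phi> \<xi>\<bar> * aL)" using \<phi>i by auto
    have "(\<lambda>p. norm (f (fst p) (snd p))) \<in> borel_measurable (lborel \<Otimes>\<^sub>M lborel)"
      using fm by measurable
    then have "(\<lambda>(x, y). norm (f x y)) \<in> borel_measurable (lborel \<Otimes>\<^sub>M lborel)"
      by (simp add: case_prod_beta)
    then show "(\<lambda>\<xi>. \<integral>w. norm (f \<xi> w) \<partial>lborel) \<in> borel_measurable lborel"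
      by (rule lborel.borel_measurable_lebesgue_integral)
    have "norm (\<integral>w. norm (f \<xi> w) \<partial>lborel) \<le> norm (\<bar>\<phi> \<xi>\<bar> * aL)" for \<xi>
    proof -
      have e: "(\<integral>w. norm (f \<xi> w) \<partial>lborel) = \<bar>\<phi> \<xi>\<bar> * (\<integral>w. indicator {..\<xi>} w * \<bar>a2 w\<bar> \<partial>lborel)"
        unfolding f_def by (simp add: abs_mult)
      have i1: "integrable lborel (\<lambda>w. indicator {..\<xi>} w * \<bar>a2 w\<bar>)"
        using integrable_mult_indicator[OF _ a2L, of "{..\<xi>}"] by simp
      have "(\<integral>w. indicator {..\<xi>} w * \<bar>a2 w\<bar> \<partial>lborel) \<le> aL"
        unfolding aL_def by (intro integral_mono[OF i1 a2L]) (auto split: split_indicator)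
      moreover have "0 \<le> (\<integral>w. indicator {..\<xi>} w * \<bar>a2 w\<bar> \<partial>lborel)" by simp
      ultimately show ?thesis unfolding e by (simp add: abs_mult mult_left_mono)
    qed
    then show "AE \<xi> in lborel. norm (\<integral>w. norm (f \<xi> w) \<partial>lborel) \<le> norm (\<bar>\<phi> \<xi>\<bar> * aL)"
      by simp
  qed
  have integ2: "AE \<xi> in lborel. integrable lborel (\<lambda>w. f \<xi> w)"
  proof (intro AE_I2)
    fix \<xi>
    show "integrable lborel (\<lambda>w. f \<xi> w)"
      unfolding f_def using integrable_mult_indicator[OF _ a2_int, of "{..\<xi>}"] by simp
  qed
  have fint: "integrable (lborel \<Otimes>\<^sub>M lborel) (case_prod f)"
    using lborel_pair.Fubini_integrable[OF fm] integ1 integ2 by (simp add: case_prod_beta')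
  have F: "(\<integral>w. (\<integral>\<xi>. f \<xi> w \<partial>lborel) \<partial>lborel) = (\<integral>\<xi>. (\<integral>w. f \<xi> w \<partial>lborel) \<partial>lborel)"
    by (rule lborel_pair.Fubini_integral[OF fint])
  have L: "(\<integral>\<xi>. aI \<xi> * h1 (\<lambda>u. g1 u - g2 u) (s + \<xi>) \<partial>lborel) = (\<integral>\<xi>. (\<integral>w. f \<xi> w \<partial>lborel) \<partial>lborel)"
  proof (rule Bochner_Integration.integral_cong[OF refl])
    fix \<xi> :: real
    show "aI \<xi> * h1 (\<lambda>u. g1 u - g2 u) (s + \<xi>) = (\<integral>w. f \<xi> w \<partial>lborel)"
    proof (cases "\<xi> \<in> {-T..0}")
      case True
      then show ?thesis unfolding inner1 a_a2[OF True, symmetric]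
        unfolding aI_def h1_def \<phi>_def d_def d2_def by (auto split: split_indicator)
    next
      case False
      then show ?thesis unfolding inner1 aI_def \<phi>_def by simp
    qed
  qed
  have R: "(\<integral>w. a2 w * RR g1 g2 (w + s) \<partial>lborel) = (\<integral>w. (\<integral>\<xi>. f \<xi> w \<partial>lborel) \<partial>lborel)"
  proof (rule Bochner_Integration.integral_cong[OF refl])
    fix w :: real
    show "a2 w * RR g1 g2 (w + s) = (\<integral>\<xi>. f \<xi> w \<partial>lborel)"
    proof (cases "w \<in> {-T..0}")
      case False
      then show ?thesis unfolding f_def a2_def by simp
    next
      case True
      define k where "k u = indicator {-T..0} (u - s) * (indicator {-T..<0} u * d u) * indicator {..u - s} w" for u
      have "(\<integral>\<xi>. f \<xi> w \<partial>lborel) = a2 w * (\<integral>\<xi>. k (s + 1 * \<xi>) \<partial>lborel)"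
        unfolding f_def k_def \<phi>_def
        apply (subst integral_mult_right_zero[symmetric])
        apply (rule Bochner_Integration.integral_cong[OF refl])
        by (simp add: mult_ac)
      also have "(\<integral>\<xi>. k (s + 1 * \<xi>) \<partial>lborel) = (\<integral>u. k u \<partial>lborel)"
        using lborel_integral_real_affine[of 1 k s] by simp
      also have "(\<integral>u. k u \<partial>lborel) = RR g1 g2 (w + s)"
        unfolding RR_def k_def d_def using True s
        by (intro Bochner_Integration.integral_cong) (auto split: split_indicator)
      finally show ?thesis by simp
    qed
  qed
  show ?thesis unfolding L R F ..
qed

end

lemma amgm_eps:
  fixes x y e :: real
  assumes "e > 0"
  shows "\<bar>x * y\<bar> \<le> e / 2 * x^2 + 1 / (2 * e) * y^2"
proof -
  have "0 \<le> (e * \<bar>x\<bar> - \<bar>y\<bar>)^2" by simp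
  then have "2 * e * \<bar>x * y\<bar> \<le> e^2 * x^2 + y^2"
    by (simp add: power2_eq_square algebra_simps abs_mult abs_mult_self_eq)
  then have "\<bar>x * y\<bar> \<le> (e^2 * x^2 + y^2) / (2 * e)"
    using assms by (simp add: field_simps)
  also have "\<dots> = e / 2 * x^2 + 1 / (2 * e) * y^2"
    using assms by (simp add: field_simps power2_eq_square)
  finally show ?thesis .
qed

context dd
begin

lemma RR_zero: "v \<ge> 0 \<Longrightarrow> RR g1 g2 v = 0"
  unfolding RR_def by (simp add: indicator_def)

lemma Q_RR:
  assumes g1: "inL2 T g1" and g2: "inL2 T g2" and v: "v \<in> {-T..0}"
  shows "(\<integral>u\<in>{v..0}. (g2 u - g1 u) \<partial>lborel) = - RR g1 g2 v"
proof -
  have dm: "d2 g1 g2 \<in> borel_measurable lborel" using d2_meas[OF g1 g2] by simp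
  have "(\<integral>u\<in>{v..0}. (g2 u - g1 u) \<partial>lborel) = (\<integral>u. - (indicator {v..0} u * d2 g1 g2 u) \<partial>lborel)"
    unfolding set_lebesgue_integral_def d2_def using v
    by (intro Bochner_Integration.integral_cong) (auto split: split_indicator)
  also have "\<dots> = - (\<integral>u. indicator {v..0} u * d2 g1 g2 u \<partial>lborel)" by simp
  also have "(\<integral>u. indicator {v..0} u * d2 g1 g2 u \<partial>lborel) = RR g1 g2 v"
    unfolding RR_def
  proof (rule integral_cong_AE)
    show "(\<lambda>u. indicator {v..0} u * d2 g1 g2 u) \<in> borel_measurable lborel" using dm by simp
    show "(\<lambda>u. indicator {v..<0} u * d2 g1 g2 u) \<in> borel_measurable lborel" using dm by simp
    show "AE u in lborel. indicator {v..0} u * d2 g1 g2 u = indicator {v..<0} u * d2 g1 g2 u"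
      using AE_lborel_singleton[of 0] by eventually_elim (auto split: split_indicator)
  qed
  finally show ?thesis .
qed

lemma RR_sq_int:
  assumes g1: "inL2 T g1" and g2: "inL2 T g2"
  shows "set_integrable lborel {-T..0} (\<lambda>v. (k + RR g1 g2 v)^2)"
proof -
  have ic: "set_integrable lborel {-T..0} (\<lambda>_. (\<bar>k\<bar> + dL1 g1 g2)^2)"
    unfolding set_integrable_def by (rule borel_integrable_compact) (auto simp: compact_Icc)
  show ?thesis
  proof (rule set_integrable_bound[OF ic])
    have "(\<lambda>v. (k + RR g1 g2 v)^2) \<in> borel_measurable borel"
      using RR_meas[OF g1 g2] by measurable
    then show "set_borel_measurable lborel {-T..0} (\<lambda>v. (k + RR g1 g2 v)^2)"
      unfolding set_borel_measurable_def by simp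
    have "\<bar>k + RR g1 g2 v\<bar> \<le> \<bar>k\<bar> + dL1 g1 g2" for v
      using RR_bound[OF g1 g2, of v] by linarith
    then have "(k + RR g1 g2 v)^2 \<le> (\<bar>k\<bar> + dL1 g1 g2)^2" for v
      by (metis abs_le_square_iff abs_of_nonneg abs_ge_zero order_trans)
    then show "AE v in lborel. v \<in> {-T..0} \<longrightarrow> norm ((k + RR g1 g2 v)^2) \<le> norm ((\<bar>k\<bar> + dL1 g1 g2)^2)"
      by (intro AE_I2) auto
  qed
qed

definition A2 where "A2 = (\<integral>v\<in>{-T..0}. (a' v)^2 \<partial>lborel)"
definition Kd where "Kd = A2 / 2 + 1 + T"

lemma A2_nn: "A2 \<ge> 0"
  unfolding A2_def set_lebesgue_integral_def by simp

lemma Kd_pos: "Kd > 0"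
  unfolding Kd_def using A2_nn T_pos by simp

lemma a2sq_int: "integrable lborel (\<lambda>w. (a2 w)^2)"
proof -
  have "integrable lborel (\<lambda>w. indicator {-T..0} w *\<^sub>R (a' w)^2)"
    using a'_L2 unfolding inL2_def set_integrable_def by blast
  then show ?thesis unfolding a2_def
    by (rule back_subst[of "integrable lborel"]) (auto simp: power2_eq_square split: split_indicator)
qed

lemma a2sq_A2: "(\<integral>w. (a2 w)^2 \<partial>lborel) = A2"
  unfolding A2_def set_lebesgue_integral_def a2_def
  by (intro Bochner_Integration.integral_cong) (auto simp: power2_eq_square split: split_indicator)

lemma D_bound:
  assumes g1: "inL2 T g1" and g2: "inL2 T g2" and e: "\<epsilon> > 0" and s: "s \<in> {0..T}"
    and nrm: "sqrt ((\<delta>/r)^2 + (\<integral>v\<in>{-T..0}. (\<delta>/r - (\<integral>u\<in>{v..0}. (g2 u - g1 u) \<partial>lborel))^2 \<partial>lborel)) < \<epsilon>"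
  shows "\<bar>\<integral>\<xi>. aI \<xi> * h1 (\<lambda>u. g1 u - g2 u) (s + \<xi>) \<partial>lborel\<bar> \<le> Kd * \<epsilon>"
proof -
  define k where "k = \<delta> / r"
  define R where "R = RR g1 g2"
  have Rm: "R \<in> borel_measurable borel" unfolding R_def using RR_meas[OF g1 g2] .
  define I where "I = (\<integral>v\<in>{-T..0}. (k + R v)^2 \<partial>lborel)"
  have Ieq: "(\<integral>v\<in>{-T..0}. (\<delta>/r - (\<integral>u\<in>{v..0}. (g2 u - g1 u) \<partial>lborel))^2 \<partial>lborel) = I"
    unfolding I_def k_def R_def
    by (intro set_lebesgue_integral_cong) (auto simp: Q_RR[OF g1 g2])
  have I0: "I \<ge> 0" unfolding I_def set_lebesgue_integral_def by simp
  define N2 where "N2 = k^2 + I"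
  have N20: "N2 \<ge> 0" unfolding N2_def using I0 by simp
  have "sqrt N2 < \<epsilon>" using nrm unfolding N2_def Ieq k_def .
  then have "(sqrt N2)^2 < \<epsilon>^2" using N20 by (intro power_strict_mono) auto
  then have N2e: "N2 < \<epsilon>^2" using N20 by simp
  define JR where "JR = (\<integral>v\<in>{-T..0}. (R v)^2 \<partial>lborel)"
  have iR: "set_integrable lborel {-T..0} (\<lambda>v. (R v)^2)"
    using RR_sq_int[OF g1 g2, of 0] unfolding R_def by simp
  have ikR: "set_integrable lborel {-T..0} (\<lambda>v. (k + R v)^2)"
    using RR_sq_int[OF g1 g2, of k] unfolding R_def by simp
  have ic: "set_integrable lborel {-T..0} (\<lambda>_. 2 * k^2)"
    unfolding set_integrable_def by (rule borel_integrable_compact) (auto simp: compact_Icc)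
  have "JR \<le> (\<integral>v\<in>{-T..0}. 2 * (k + R v)^2 + 2 * k^2 \<partial>lborel)"
    unfolding JR_def
  proof (rule set_integral_mono[OF iR])
    show "set_integrable lborel {-T..0} (\<lambda>v. 2 * (k + R v)^2 + 2 * k^2)"
      using ikR ic by auto
    fix v :: real
    have "0 \<le> (k + R v + k)^2" by simp
    then show "(R v)^2 \<le> 2 * (k + R v)^2 + 2 * k^2"
      by (simp add: power2_eq_square algebra_simps)
  qed
  also have "\<dots> = 2 * I + T * (2 * k^2)"
    using ikR ic T_pos unfolding I_def by (simp add: set_integral_const)
  also have "\<dots> \<le> 2 * (1 + T) * N2"
    unfolding N2_def using T_pos I0 by (simp add: algebra_simps)
  finally have JRb: "JR \<le> 2 * (1 + T) * \<epsilon>^2"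
    using N2e T_pos by (smt (verit, best) mult_left_mono)
  have D: "(\<integral>\<xi>. aI \<xi> * h1 (\<lambda>u. g1 u - g2 u) (s + \<xi>) \<partial>lborel) = (\<integral>w. a2 w * R (w + s) \<partial>lborel)"
    unfolding R_def using D_fubini[OF g1 g2] s by auto
  have Rs_m: "(\<lambda>w. R (w + s)) \<in> borel_measurable borel" using Rm by measurable
  have i1: "integrable lborel (\<lambda>w. a2 w * R (w + s))"
  proof (rule Bochner_Integration.integrable_bound[of _ "\<lambda>w. dL1 g1 g2 * a2 w"])
    show "integrable lborel (\<lambda>w. dL1 g1 g2 * a2 w)" using a2_int by simp
    show "(\<lambda>w. a2 w * R (w + s)) \<in> borel_measurable lborel"
      using a2_meas Rs_m by simp
    have "\<bar>a2 w * R (w + s)\<bar> \<le> \<bar>dL1 g1 g2 * a2 w\<bar>" for w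
      using RR_bound[OF g1 g2, of "w + s"] unfolding R_def
      by (simp add: abs_mult) (metis abs_ge_zero mult.commute mult_left_mono)
    then show "AE w in lborel. norm (a2 w * R (w + s)) \<le> norm (dL1 g1 g2 * a2 w)" by simp
  qed
  have iRR: "integrable lborel (\<lambda>v. indicator {-T..0} v * (R v)^2)"
    using iR unfolding set_integrable_def by simp
  have iRs: "integrable lborel (\<lambda>w. indicator {-T..0} (s + 1 * w) * (R (s + 1 * w))^2)"
    by (rule lborel_integrable_real_affine[OF iRR]) simp
  have i2: "integrable lborel (\<lambda>w. \<epsilon> / 2 * (a2 w)^2 + 1 / (2 * \<epsilon>) * (indicator {-T..0} (w + s) * (R (w + s))^2))"
    using a2sq_int iRs by (simp add: add.commute)
  have "\<bar>\<integral>w. a2 w * R (w + s) \<partial>lborel\<bar> \<le>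
        (\<integral>w. \<epsilon> / 2 * (a2 w)^2 + 1 / (2 * \<epsilon>) * (indicator {-T..0} (w + s) * (R (w + s))^2) \<partial>lborel)"
  proof (rule integral_abs_bound_integral[OF i1 i2])
    fix w :: real
    show "\<bar>a2 w * R (w + s)\<bar> \<le> \<epsilon> / 2 * (a2 w)^2 + 1 / (2 * \<epsilon>) * (indicator {-T..0} (w + s) * (R (w + s))^2)"
    proof (cases "w \<in> {-T..0} \<and> w + s < 0")
      case True
      then have "indicator {-T..0} (w + s) = (1::real)" using s by auto
      then show ?thesis using amgm_eps[OF e, of "a2 w" "R (w + s)"] by simp
    next
      case False
      then have "a2 w * R (w + s) = 0"
        unfolding a2_def R_def using RR_zero[of "w + s" g1 g2] by auto
      moreover have "0 \<le> \<epsilon> / 2 * (a2 w)^2 + 1 / (2 * \<epsilon>) * (indicator {-T..0} (w + s) * (R (w + s))^2)"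
        using e by (intro add_nonneg_nonneg mult_nonneg_nonneg) auto
      ultimately show ?thesis by (metis abs_zero)
    qed
  qed
  also have "\<dots> = \<epsilon> / 2 * A2 + 1 / (2 * \<epsilon>) * (\<integral>w. indicator {-T..0} (s + 1 * w) * (R (s + 1 * w))^2 \<partial>lborel)"
    using a2sq_int iRs a2sq_A2 by (simp add: add.commute)
  also have "(\<integral>w. indicator {-T..0} (s + 1 * w) * (R (s + 1 * w))^2 \<partial>lborel) = JR"
    unfolding JR_def set_lebesgue_integral_def
    using lborel_integral_real_affine[of 1 "\<lambda>v. indicator {-T..0} v * (R v)^2" s] by simp
  also have "\<epsilon> / 2 * A2 + 1 / (2 * \<epsilon>) * JR \<le> \<epsilon> / 2 * A2 + 1 / (2 * \<epsilon>) * (2 * (1 + T) * \<epsilon>^2)"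
    using JRb e by (intro add_left_mono mult_left_mono) auto
  also have "\<dots> = Kd * \<epsilon>"
    unfolding Kd_def using e by (simp add: field_simps power2_eq_square)
  finally show ?thesis unfolding D .
qed

end

lemma set_integrable_mult_ind:
  fixes f :: "real \<Rightarrow> real"
  assumes "set_integrable lborel A f" "B \<in> sets lborel"
  shows "set_integrable lborel A (\<lambda>s. indicator B s * f s)"
proof -
  have "integrable lborel (\<lambda>s. indicator B s *\<^sub>R (indicator A s *\<^sub>R f s))"
    using integrable_mult_indicator[OF assms(2)] assms(1) unfolding set_integrable_def by blast
  then show ?thesis unfolding set_integrable_def by (simp add: mult_ac)
qed

lemma split_int:
  fixes f :: "real \<Rightarrow> real"
  assumes "set_integrable lborel {0..t} f" "0 \<le> T" "T \<le> t"
  shows "(\<integral>s\<in>{0..t}. f s \<partial>lborel) = (\<integral>s\<in>{0..T}. f s \<partial>lborel) + (\<integral>s\<in>{T<..t}. f s \<partial>lborel)"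
proof -
  have i1: "set_integrable lborel {0..T} f"
    by (rule set_integrable_subset[OF assms(1)]) (use assms in auto)
  have i2: "set_integrable lborel {T<..t} f"
    by (rule set_integrable_subset[OF assms(1)]) (use assms in auto)
  have "(\<integral>s\<in>{0..t}. f s \<partial>lborel) = (\<integral>s. indicator {0..T} s *\<^sub>R f s + indicator {T<..t} s *\<^sub>R f s \<partial>lborel)"
    unfolding set_lebesgue_integral_def using assms
    by (intro Bochner_Integration.integral_cong) (auto split: split_indicator)
  also have "\<dots> = (\<integral>s\<in>{0..T}. f s \<partial>lborel) + (\<integral>s\<in>{T<..t}. f s \<partial>lborel)"
    using i1 i2 unfolding set_integrable_def set_lebesgue_integral_def by simp
  finally show ?thesis .
qed

lemma FTC_set:
  fixes F f :: "real \<Rightarrow> real"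
  assumes "a \<le> b" "continuous_on {a..b} f" "\<And>x. a \<le> x \<Longrightarrow> x \<le> b \<Longrightarrow> (F has_real_derivative f x) (at x)"
  shows "(\<integral>s\<in>{a..b}. f s \<partial>lborel) = F b - F a"
proof -
  have "(LBINT x=a..b. f x) = F b - F a"
    using assms by (intro interval_integral_FTC_finite)
      (auto simp: has_real_derivative_iff_has_vector_derivative intro: has_vector_derivative_at_within)
  then show ?thesis using interval_integral_Icc[OF assms(1), where f=f] by simp
qed

lemma FTC_set_Ioc:
  fixes F f :: "real \<Rightarrow> real"
  assumes "a \<le> b" "continuous_on {a..b} f" "\<And>x. a \<le> x \<Longrightarrow> x \<le> b \<Longrightarrow> (F has_real_derivative f x) (at x)"
  shows "(\<integral>s\<in>{a<..b}. f s \<partial>lborel) = F b - F a"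
proof -
  have "(LBINT x=a..b. f x) = F b - F a"
    using assms by (intro interval_integral_FTC_finite)
      (auto simp: has_real_derivative_iff_has_vector_derivative intro: has_vector_derivative_at_within)
  then show ?thesis using interval_integral_Ioc[OF assms(1), where f=f] by simp
qed


context dd
begin

lemma construct:
  assumes ge: "inL2 T ge" and gz: "inL2 T gz"
    and ce: "cint ce" "\<And>t. t \<ge> 0 \<Longrightarrow> ce t \<ge> 0"
    and xe: "good ge xe" "xe = Phi ge e0 ce xe"
    and m: "m > 0" "\<And>t. t \<in> {0..T} \<Longrightarrow> xe t \<ge> m"
    and Dm: "\<And>s. s \<in> {0..T} \<Longrightarrow> \<bar>\<integral>\<xi>. aI \<xi> * h1 (\<lambda>u. ge u - gz u) (s + \<xi>) \<partial>lborel\<bar> \<le> Dm"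
    and small: "\<bar>e0 - z0\<bar> + (Lc * \<bar>e0 - z0\<bar> + C * Dm) * exp ((Lc + 1) * T) \<le> m / 2"
  shows "\<exists>x c. good gz x \<and> x = Phi gz z0 c x \<and> cint c \<and> (\<forall>t\<ge>0. c t \<ge> 0) \<and>
           (\<forall>t\<in>{0..T}. x t \<ge> m / 2) \<and> x T \<ge> m / 2 \<and> (\<forall>t\<ge>T. x t = x T * exp (- C * (t - T)))"
proof -
  have Dm0: "Dm \<ge> 0" using Dm[of 0] T_pos by (meson abs_ge_zero atLeastAtMost_iff less_eq_real_def order_trans)
  define \<phi>0 where "\<phi>0 = e0 - z0"
  define lam where "lam = Lc + 1"
  define \<gamma> where "\<gamma> = Lc * \<bar>\<phi>0\<bar> + C * Dm"
  have \<gamma>0: "\<gamma> \<ge> 0" unfolding \<gamma>_def using Lc_pos C_nn Dm0 by simp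
  have lam0: "lam > 0" unfolding lam_def using Lc_pos by simp
  define \<phi> where "\<phi> t = \<phi>0 + \<gamma> * (exp (lam * t) - 1)" for t
  define \<phi>' where "\<phi>' t = \<gamma> * lam * exp (lam * t)" for t
  have \<phi>d: "(\<phi> has_real_derivative \<phi>' t) (at t)" for t
    unfolding \<phi>_def \<phi>'_def by (auto intro!: derivative_eq_intros)
  have \<phi>c: "continuous_on S \<phi>" for S unfolding \<phi>_def by (intro continuous_intros)
  have \<phi>'c: "continuous_on S \<phi>'" for S unfolding \<phi>'_def by (intro continuous_intros)
  have \<phi>bd: "\<bar>\<phi> u\<bar> \<le> \<bar>\<phi>0\<bar> + \<gamma> * (exp (lam * s) - 1)" if "0 \<le> u" "u \<le> s" for u s
  proof -
    have "1 \<le> exp (lam * u)" using that lam0 by simp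
    moreover have "exp (lam * u) \<le> exp (lam * s)" using that lam0 by simp
    ultimately have "0 \<le> \<gamma> * (exp (lam * u) - 1)" "\<gamma> * (exp (lam * u) - 1) \<le> \<gamma> * (exp (lam * s) - 1)"
      using \<gamma>0 by (auto intro: mult_left_mono)
    then show ?thesis unfolding \<phi>_def by linarith
  qed
  define xT where "xT = xe T - \<phi> T"
  define xz where "xz t = (if t < 0 then gz t else if t \<le> T then xe t - \<phi> t else xT * exp (- C * (t - T)))" for t
  define w where "w t = (if t < 0 then ge t else xz t)" for t
  define Gd where "Gd s = (if s \<le> T then G xe ce s - \<phi>' s else - C * xz s)" for s
  define cz where "cz s = r * xz s + f0 (xz s) (Y xz s) - Gd s" for s
  have pos1: "xz t \<ge> m / 2" if t: "t \<in> {0..T}" for t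
  proof -
    have "\<bar>\<phi> t\<bar> \<le> \<bar>\<phi>0\<bar> + \<gamma> * (exp (lam * T) - 1)" using \<phi>bd[of t T] t by auto
    also have "\<dots> \<le> \<bar>\<phi>0\<bar> + \<gamma> * exp (lam * T)" using \<gamma>0 by (simp add: algebra_simps)
    also have "\<dots> \<le> m / 2" using small unfolding \<phi>0_def \<gamma>_def lam_def by simp
    finally have "\<bar>\<phi> t\<bar> \<le> m / 2" .
    moreover have "xe t \<ge> m" using m(2) t .
    moreover have "xz t = xe t - \<phi> t" using t unfolding xz_def by auto
    ultimately show ?thesis by linarith
  qed
  have xzT: "xz T = xT" unfolding xz_def xT_def using T_pos by simp
  have xTpos: "xT \<ge> m / 2" using pos1[of T] T_pos xzT by simp
  have xzpos: "xz t > 0" if "t \<ge> 0" for t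
  proof (cases "t \<le> T")
    case True then show ?thesis using pos1[of t] that m(1) by simp
  next
    case False then show ?thesis unfolding xz_def using xTpos m(1) that by simp
  qed
  have xz_after: "xz t = xz T * exp (- C * (t - T))" if "t \<ge> T" for t
    using that T_pos xzT unfolding xz_def by (cases "t = T") auto
  have contz: "continuous_on {0..} xz"
  proof -
    have cxe: "continuous_on {0..T} xe"
      using xe(1) unfolding good_def by (rule continuous_on_subset[OF conjunct2[OF conjunct2]]) auto
    have c1: "continuous_on {0..T} (\<lambda>t. xe t - \<phi> t)"
      using cxe \<phi>c by (rule continuous_on_diff)
    have c1': "continuous_on {0..T} xz"
      by (rule continuous_on_cong[THEN iffD1, OF refl _ c1]) (auto simp: xz_def)
    have c2: "continuous_on {T..} (\<lambda>t. xT * exp (- C * (t - T)))"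
      by (intro continuous_intros)
    have c2': "continuous_on {T..} xz"
      by (rule continuous_on_cong[THEN iffD1, OF refl _ c2]) (use xz_after xzT in auto)
    have "continuous_on ({0..T} \<union> {T..}) xz"
      using c1' c2' by (intro continuous_on_closed_Un) auto
    moreover have "{0..T} \<union> {T..} = {0::real..}" using T_pos by auto
    ultimately show ?thesis by simp
  qed
  have goodz: "good gz xz" using gz contz unfolding good_def xz_def by auto
  have goodw: "good ge w"
  proof -
    have "continuous_on {0..} w"
      by (rule continuous_on_cong[THEN iffD1, OF refl _ contz]) (auto simp: w_def)
    then show ?thesis using ge unfolding good_def w_def by auto
  qed
  have xe_eq: "xe t = e0 + (\<integral>s\<in>{0..t}. G xe ce s \<partial>lborel)" if "t \<ge> 0" for t
    using fun_cong[OF xe(2), of t] that unfolding Phi_def by auto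
  have iGe: "set_integrable lborel {0..t} (G xe ce)" if "t \<ge> 0" for t
    using G_int[OF xe(1) that] ce(1) that unfolding cint_def by auto
  have i\<phi>': "set_integrable lborel {0..t} \<phi>'" for t
    unfolding set_integrable_def by (rule borel_integrable_compact) (auto simp: compact_Icc \<phi>'c)
  have ixz: "set_integrable lborel {0..t} (\<lambda>s. - C * xz s)" for t
    unfolding set_integrable_def
    by (rule borel_integrable_compact) (auto simp: compact_Icc intro!: continuous_intros continuous_on_subset[OF contz])
  have iGd: "set_integrable lborel {0..t} Gd" if t: "t \<ge> 0" for t
  proof -
    have "set_integrable lborel {0..t} (\<lambda>s. indicator {..T} s * (G xe ce s - \<phi>' s) + indicator {T<..} s * (- C * xz s))"
      using iGe[OF t] i\<phi>'[of t] ixz[of t]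
      by (intro set_integral_add(1) set_integrable_mult_ind set_integral_diff(1)) auto
    moreover have "(\<lambda>s. indicator {..T} s * (G xe ce s - \<phi>' s) + indicator {T<..} s * (- C * xz s)) = Gd"
      unfolding Gd_def by (auto simp: fun_eq_iff split: split_indicator)
    ultimately show ?thesis by simp
  qed
  have eq1: "xz t = z0 + (\<integral>s\<in>{0..t}. Gd s \<partial>lborel)" if t: "t \<in> {0..T}" for t
  proof -
    have "(\<integral>s\<in>{0..t}. Gd s \<partial>lborel) = (\<integral>s\<in>{0..t}. G xe ce s - \<phi>' s \<partial>lborel)"
      using t unfolding Gd_def by (intro set_lebesgue_integral_cong) auto
    also have "\<dots> = (\<integral>s\<in>{0..t}. G xe ce s \<partial>lborel) - (\<integral>s\<in>{0..t}. \<phi>' s \<partial>lborel)"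
      using iGe[of t] i\<phi>'[of t] t by (intro set_integral_diff(2)) auto
    also have "(\<integral>s\<in>{0..t}. \<phi>' s \<partial>lborel) = \<phi> t - \<phi> 0"
      using t by (intro FTC_set \<phi>'c \<phi>d) auto
    also have "(\<integral>s\<in>{0..t}. G xe ce s \<partial>lborel) = xe t - e0" using xe_eq[of t] t by auto
    finally show ?thesis using t unfolding xz_def \<phi>_def \<phi>0_def by auto
  qed
  have eq2: "xz t = z0 + (\<integral>s\<in>{0..t}. Gd s \<partial>lborel)" if t: "t > T" for t
  proof -
    have "(\<integral>s\<in>{0..t}. Gd s \<partial>lborel) = (\<integral>s\<in>{0..T}. Gd s \<partial>lborel) + (\<integral>s\<in>{T<..t}. Gd s \<partial>lborel)"
      using iGd[of t] t T_pos by (intro split_int) auto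
    also have "(\<integral>s\<in>{0..T}. Gd s \<partial>lborel) = xT - z0"
      using eq1[of T] T_pos xzT by auto
    also have "(\<integral>s\<in>{T<..t}. Gd s \<partial>lborel) = (\<integral>s\<in>{T<..t}. - C * (xT * exp (- C * (s - T))) \<partial>lborel)"
      unfolding Gd_def xz_def using T_pos by (intro set_lebesgue_integral_cong) auto
    also have "\<dots> = xT * exp (- C * (t - T)) - xT * exp (- C * (T - T))"
      using t by (intro FTC_set_Ioc) (auto intro!: continuous_intros derivative_eq_intros)
    finally show ?thesis unfolding xz_def using t T_pos by simp
  qed
  have eqz: "xz = Phi gz z0 cz xz"
  proof
    fix t
    have "G xz cz = Gd" unfolding G_def cz_def by auto
    then show "xz t = Phi gz z0 cz xz t"
      unfolding Phi_def using eq1[of t] eq2[of t] by (auto simp: xz_def)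
  qed
  have cintz: "cint cz"
    unfolding cint_def
  proof (intro allI impI)
    fix t :: real assume t: "t \<ge> 0"
    have "cint (\<lambda>_::real. 0::real)" unfolding cint_def using const_setint[where k=0] by auto
    then have "set_integrable lborel {0..t} (G xz (\<lambda>_. 0))"
      using G_int[OF goodz t] t unfolding cint_def by auto
    then have "set_integrable lborel {0..t} (\<lambda>s. G xz (\<lambda>_. 0) s - Gd s)"
      using iGd[OF t] by (intro set_integral_diff(1))
    moreover have "(\<lambda>s. G xz (\<lambda>_. 0) s - Gd s) = cz" unfolding G_def cz_def by auto
    ultimately show "set_integrable lborel {0..t} cz" by simp
  qed
  have cz_nn: "cz s \<ge> 0" if s0: "s \<ge> 0" for s
  proof (cases "s \<le> T")
    case True
    define \<beta> where "\<beta> = \<bar>\<phi>0\<bar> + \<gamma> * (exp (lam * s) - 1)"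
    have b1: "\<bar>Y xe s - Y w s\<bar> \<le> Ab * T * \<beta>"
    proof (rule Y_diff[OF xe(1) goodw s0])
      fix u assume u: "u \<in> {0..s}"
      then have "w u = xe u - \<phi> u" using True unfolding w_def xz_def by auto
      then show "\<bar>xe u - w u\<bar> \<le> \<beta>" unfolding \<beta>_def using \<phi>bd[of u s] u by auto
    qed
    have b2: "\<bar>Y w s - Y xz s\<bar> \<le> Dm"
    proof -
      have ew: "\<forall>t<0. w t = ge t" unfolding w_def by auto
      have ez: "\<forall>t<0. xz t = gz t" unfolding xz_def by auto
      have "Y w s - Y xz s = (\<integral>\<xi>. aI \<xi> * hx ge w (s + \<xi>) - aI \<xi> * hx gz xz (s + \<xi>) \<partial>lborel)"
        unfolding Y_hx_int[OF ew s0] Y_hx_int[OF ez s0]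
        by (rule Bochner_Integration.integral_diff[OF int_aI_hx[OF goodw s0] int_aI_hx[OF goodz s0], symmetric])
      also have "\<dots> = (\<integral>\<xi>. aI \<xi> * h1 (\<lambda>u. ge u - gz u) (s + \<xi>) \<partial>lborel)"
        unfolding hx_def h1_def w_def
        by (intro Bochner_Integration.integral_cong) (auto simp: algebra_simps split: split_indicator)
      finally show ?thesis using Dm[of s] True s0 by simp
    qed
    have Yb: "\<bar>Y xe s - Y xz s\<bar> \<le> Ab * T * \<beta> + Dm" using b1 b2 by linarith
    have \<phi>s: "\<bar>\<phi> s\<bar> \<le> \<beta>" unfolding \<beta>_def using \<phi>bd[of s s] s0 by auto
    have xzs: "xz s = xe s - \<phi> s" using True s0 unfolding xz_def by auto
    have cz_eq: "cz s = ce s + \<phi>' s - r * \<phi> s + (f0 (xz s) (Y xz s) - f0 (xe s) (Y xe s))"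
      unfolding cz_def Gd_def G_def using True by (simp add: xzs algebra_simps)
    have fl: "f0 (xz s) (Y xz s) - f0 (xe s) (Y xe s) \<ge> - C * (\<bar>\<phi> s\<bar> + (Ab * T * \<beta> + Dm))"
    proof -
      have "\<bar>f0 (xz s) (Y xz s) - f0 (xe s) (Y xe s)\<bar> \<le> C * (\<bar>xz s - xe s\<bar> + \<bar>Y xz s - Y xe s\<bar>)"
        by (rule f_lip)
      also have "\<dots> \<le> C * (\<bar>\<phi> s\<bar> + (Ab * T * \<beta> + Dm))"
        using Yb xzs C_nn by (intro mult_left_mono) (auto simp: abs_minus_commute)
      finally show ?thesis by linarith
    qed
    have E1: "exp (lam * s) \<ge> 1" using lam0 s0 by simp
    have key: "r * \<phi> s + C * (\<bar>\<phi> s\<bar> + (Ab * T * \<beta> + Dm)) \<le> \<phi>' s"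
    proof -
      have "r * \<phi> s \<le> r * \<beta>" using \<phi>s r_pos by (intro mult_left_mono) auto
      moreover have "C * (\<bar>\<phi> s\<bar> + (Ab * T * \<beta> + Dm)) \<le> C * (\<beta> + (Ab * T * \<beta> + Dm))"
        using \<phi>s C_nn by (intro mult_left_mono) auto
      moreover have "r * \<beta> + C * (\<beta> + (Ab * T * \<beta> + Dm)) = Lc * \<beta> + C * Dm"
        unfolding Lc_def by (simp add: algebra_simps)
      moreover have "Lc * \<beta> + C * Dm = \<gamma> * (1 - Lc) + Lc * \<gamma> * exp (lam * s)"
        unfolding \<beta>_def \<gamma>_def by (simp add: algebra_simps)
      moreover have "\<phi>' s - (\<gamma> * (1 - Lc) + Lc * \<gamma> * exp (lam * s)) = \<gamma> * (exp (lam * s) - 1) + Lc * \<gamma>"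
        unfolding \<phi>'_def lam_def by (simp add: algebra_simps)
      moreover have "\<gamma> * (exp (lam * s) - 1) + Lc * \<gamma> \<ge> 0"
        using \<gamma>0 E1 Lc_pos by (intro add_nonneg_nonneg mult_nonneg_nonneg) auto
      ultimately show ?thesis by linarith
    qed
    show ?thesis using cz_eq fl key ce(2)[OF s0] by linarith
  next
    case False
    have xzp: "xz s > 0" using xzpos s0 by simp
    have Y0: "Y xz s \<ge> 0"
      unfolding Y_def set_lebesgue_integral_def
    proof (rule Bochner_Integration.integral_nonneg)
      fix \<xi> :: real
      show "0 \<le> indicator {-T..0} \<xi> *\<^sub>R (a \<xi> * xz (s + \<xi>))"
      proof (cases "\<xi> \<in> {-T..0}")
        case True
        then have "xz (s + \<xi>) > 0" using xzpos[of "s + \<xi>"] False by auto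
        then show ?thesis using a_nn[OF True] True by simp
      qed simp
    qed
    have "f0 (xz s) (Y xz s) \<ge> f0 (xz s) 0" using f_mono Y0 by blast
    moreover have "f0 (xz s) 0 \<ge> - C * xz s"
      using f_lip[of "xz s" 0 0 0] f_00 xzp by (simp add: abs_le_iff)
    ultimately have "cz s \<ge> r * xz s" unfolding cz_def Gd_def using False by simp
    then show ?thesis using xzp r_pos by (smt (verit) mult_pos_pos)
  qed
  have A: "\<forall>t\<ge>0. cz t \<ge> 0" using cz_nn by blast
  have B: "\<forall>t\<in>{0..T}. xz t \<ge> m / 2" using pos1 by blast
  have Cc: "xz T \<ge> m / 2" using xTpos xzT by simp
  have D: "\<forall>t\<ge>T. xz t = xz T * exp (- C * (t - T))" using xz_after by blast
  show ?thesis
    apply (rule exI[of _ xz])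
    apply (rule exI[of _ cz])
    using goodz eqz cintz A B Cc D by (intro conjI) assumption+
qed

end

lemma exp_setint:
  assumes "\<rho> > (0::real)"
  shows "set_integrable lborel {0..} (\<lambda>t. exp (-\<rho> * t) * k)"
proof -
  have i1: "set_integrable lborel {0<..} (\<lambda>x. exp (-(x * \<rho>)))"
    using integrable_I0i_exp_mscale[OF assms] .
  have i2: "set_integrable lborel {0..0} (\<lambda>x. exp (-(x * \<rho>)))"
    unfolding set_integrable_def by (rule borel_integrable_compact) (auto intro!: continuous_intros)
  have "integrable lborel (\<lambda>x. indicator {0<..} x *\<^sub>R exp (-(x * \<rho>)) + indicator {0..0} x *\<^sub>R exp (-(x * \<rho>)))"
    using i1 i2 unfolding set_integrable_def by auto
  then have "set_integrable lborel {0..} (\<lambda>x. exp (-(x * \<rho>)))"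
    unfolding set_integrable_def
    by (rule back_subst[of "integrable lborel"]) (auto simp: fun_eq_iff split: split_indicator)
  then show ?thesis by (simp add: mult.commute)
qed

lemma J_fin:
  fixes U1 U2 c x :: "real \<Rightarrow> real"
  assumes rho: "\<rho> > 0" and C: "C \<ge> 0" and T: "T > 0"
    and B1: "\<And>u. u \<ge> 0 \<Longrightarrow> \<bar>U1 u\<bar> \<le> B1"
    and U2m: "\<And>p q. 0 < p \<Longrightarrow> p \<le> q \<Longrightarrow> U2 p \<le> U2 q"
    and U2i: "set_integrable lborel {0..} (\<lambda>t. exp (-\<rho> * t) * U2 (exp (- C * t)))"
    and c: "\<And>t. t \<ge> 0 \<Longrightarrow> c t \<ge> 0"
    and mu: "\<mu> > 0" and x1: "\<And>t. t \<in> {0..T} \<Longrightarrow> x t \<ge> \<mu>" and x2: "x T \<ge> \<mu>"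
    and x3: "\<And>t. t \<ge> T \<Longrightarrow> x t = x T * exp (- C * (t - T))"
  shows "(\<integral>\<^sup>+t\<in>{0..}. ennreal (- (exp (-\<rho> * t) * (U1 (c t) + U2 (x t)))) \<partial>lborel) < \<infinity>"
proof -
  obtain V where V: "\<And>t. t \<ge> 0 \<Longrightarrow> V t \<le> U2 (x t)"
    and Vi: "set_integrable lborel {0..} (\<lambda>t. exp (-\<rho> * t) * V t)"
  proof (cases "C = 0")
    case True
    have "x t \<ge> \<mu>" if "t \<ge> 0" for t
      using x1[of t] x2 x3[of t] that True by (cases "t \<le> T") auto
    then have "U2 \<mu> \<le> U2 (x t)" if "t \<ge> 0" for t using U2m mu that by blast
    then show ?thesis using that[of "\<lambda>_. U2 \<mu>"] exp_setint[OF rho] by blast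
  next
    case False
    then have Cp: "C > 0" using C by simp
    define \<tau> where "\<tau> = \<bar>ln \<mu>\<bar> / C"
    have \<tau>0: "\<tau> \<ge> 0" unfolding \<tau>_def using Cp by simp
    have e\<tau>: "exp (- C * \<tau>) \<le> \<mu>"
    proof -
      have "- C * \<tau> = - \<bar>ln \<mu>\<bar>" unfolding \<tau>_def using Cp by simp
      also have "\<dots> \<le> ln \<mu>" by simp
      finally show ?thesis using mu by (metis exp_le_cancel_iff exp_ln)
    qed
    have lb: "exp (- C * (t + \<tau>)) \<le> x t" if t: "t \<ge> 0" for t
    proof (cases "t \<le> T")
      case True
      have "exp (- C * (t + \<tau>)) \<le> exp (- C * \<tau>)" using Cp t by (simp add: mult_left_mono)
      moreover have "\<mu> \<le> x t" using x1[of t] True t by auto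
      ultimately show ?thesis using e\<tau> by linarith
    next
      case False
      have "exp (- C * (t + \<tau>)) = exp (- C * \<tau>) * exp (- C * t)" by (simp add: algebra_simps flip: exp_add)
      also have "\<dots> \<le> \<mu> * exp (- C * (t - T))"
        using e\<tau> Cp T mu by (intro mult_mono) (auto simp: mult_left_mono)
      also have "\<dots> \<le> x T * exp (- C * (t - T))" using x2 by simp
      finally show ?thesis using x3[of t] False by simp
    qed
    have V1: "U2 (exp (- C * (t + \<tau>))) \<le> U2 (x t)" if "t \<ge> 0" for t
      using U2m[OF _ lb[OF that]] by simp
    define f where "f s = indicator {0..} s * (exp (-\<rho> * s) * U2 (exp (- C * s)))" for s
    have fi: "integrable lborel f" using U2i unfolding set_integrable_def f_def by simp
    have "integrable lborel (\<lambda>t. f (\<tau> + 1 * t))"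
      by (rule lborel_integrable_real_affine[OF fi]) simp
    then have "integrable lborel (\<lambda>t. exp (\<rho> * \<tau>) * (indicator {0..} t * f (\<tau> + t)))"
      using integrable_mult_indicator[of "{0..}" lborel "\<lambda>t. f (\<tau> + t)"] by simp
    moreover have "(\<lambda>t. exp (\<rho> * \<tau>) * (indicator {0..} t * f (\<tau> + t))) =
        (\<lambda>t. indicator {0..} t *\<^sub>R (exp (-\<rho> * t) * U2 (exp (- C * (t + \<tau>)))))"
    proof
      fix t
      show "exp (\<rho> * \<tau>) * (indicator {0..} t * f (\<tau> + t)) = indicator {0..} t *\<^sub>R (exp (-\<rho> * t) * U2 (exp (- C * (t + \<tau>))))"
      proof (cases "t \<ge> 0")
        case True
        have "exp (\<rho> * \<tau>) * exp (-\<rho> * (\<tau> + t)) = exp (-\<rho> * t)"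
          by (simp add: algebra_simps flip: exp_add)
        then show ?thesis unfolding f_def using True \<tau>0 by (simp add: algebra_simps)
      qed simp
    qed
    ultimately have "set_integrable lborel {0..} (\<lambda>t. exp (-\<rho> * t) * U2 (exp (- C * (t + \<tau>))))"
      unfolding set_integrable_def by simp
    then show ?thesis using that[of "\<lambda>t. U2 (exp (- C * (t + \<tau>)))"] V1 by blast
  qed
  define H where "H t = indicator {0..} t * (exp (-\<rho> * t) * B1 + \<bar>exp (-\<rho> * t) * V t\<bar>)" for t
  have Hi: "integrable lborel H"
  proof -
    have "set_integrable lborel {0..} (\<lambda>t. exp (-\<rho> * t) * B1 + \<bar>exp (-\<rho> * t) * V t\<bar>)"
      using exp_setint[OF rho, of B1] set_integrable_abs[OF Vi] by (intro set_integral_add(1))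
    then show ?thesis unfolding H_def set_integrable_def by simp
  qed
  have "(\<integral>\<^sup>+t\<in>{0..}. ennreal (- (exp (-\<rho> * t) * (U1 (c t) + U2 (x t)))) \<partial>lborel) \<le> (\<integral>\<^sup>+t. ennreal (norm (H t)) \<partial>lborel)"
  proof (rule nn_integral_mono)
    fix t :: real
    show "ennreal (- (exp (-\<rho> * t) * (U1 (c t) + U2 (x t)))) * indicator {0..} t \<le> ennreal (norm (H t))"
    proof (cases "t \<ge> 0")
      case True
      have "- (exp (-\<rho> * t) * (U1 (c t) + U2 (x t))) \<le> exp (-\<rho> * t) * (B1 - V t)"
      proof -
        have "- U1 (c t) - U2 (x t) \<le> B1 - V t" using B1[OF c[OF True]] V[OF True] by linarith
        then have "exp (-\<rho> * t) * (- U1 (c t) - U2 (x t)) \<le> exp (-\<rho> * t) * (B1 - V t)"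
          by (intro mult_left_mono) auto
        then show ?thesis by (simp add: algebra_simps)
      qed
      also have "\<dots> \<le> H t"
      proof -
        have "H t = exp (-\<rho> * t) * B1 + \<bar>exp (-\<rho> * t) * V t\<bar>" unfolding H_def using True by simp
        moreover have "- (exp (-\<rho> * t) * V t) \<le> \<bar>exp (-\<rho> * t) * V t\<bar>" by (rule abs_ge_minus_self)
        moreover have "exp (-\<rho> * t) * (B1 - V t) = exp (-\<rho> * t) * B1 - exp (-\<rho> * t) * V t"
          by (rule right_diff_distrib)
        ultimately show ?thesis by linarith
      qed
      finally show ?thesis using True by (simp add: ennreal_leI)
    qed simp
  qed
  also have "\<dots> < \<infinity>" using Hi unfolding integrable_iff_bounded by blast
  finally show ?thesis .
qed


lemma int_00: "(\<integral>s\<in>{0..0::real}. f s \<partial>lborel) = (0::real)"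
proof -
  have "(\<lambda>x. indicator {0..0::real} x *\<^sub>R f x) = (\<lambda>x. f 0 * indicator {0::real} x)"
    by (auto split: split_indicator)
  then show ?thesis unfolding set_lebesgue_integral_def by simp
qed

lemma sqrt_sum_le: "sqrt (\<bar>u::real\<bar>^2 + \<bar>v\<bar>^2) \<le> \<bar>u\<bar> + \<bar>v\<bar>"
proof -
  have "\<bar>u\<bar>^2 + \<bar>v\<bar>^2 \<le> (\<bar>u\<bar> + \<bar>v\<bar>)^2" by (simp add: power2_eq_square algebra_simps)
  then have "sqrt (\<bar>u\<bar>^2 + \<bar>v\<bar>^2) \<le> sqrt ((\<bar>u\<bar> + \<bar>v\<bar>)^2)" by (rule real_sqrt_le_mono)
  then show ?thesis by simp
qed

lemma (in dd) Phi_0: "Phi g e c x 0 = e"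
  unfolding Phi_def using int_00 by simp

lemma dd_intro:
  fixes T r C :: real and a :: "real \<Rightarrow> real" and f0 :: "real \<Rightarrow> real \<Rightarrow> real"
  assumes T_pos: "T > 0" and r_pos: "r > 0"
    and a_W12: "inW12 T a" and a_nonneg: "\<forall>s\<in>{-T..0}. a s \<ge> 0" and a_end: "a (-T) = 0"
    and f0_mono: "\<forall>x\<ge>0. \<forall>y1 y2. y1 \<le> y2 \<longrightarrow> f0 x y1 \<le> f0 x y2"
    and f0_lip: "C-lipschitz_on ({0..} \<times> UNIV) (\<lambda>(x, y). f0 x y)"
    and f0_pos: "\<forall>y>0. f0 0 y > 0"
    and f0_ext: "\<forall>x<0. \<forall>y. f0 x y = f0 0 y"
  shows "\<exists>a'. dd T r C a a' f0"
proof -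
  obtain g' where g': "inL2 T g'" "\<forall>s\<in>{-T..0}. a s = a (-T) + (\<integral>u\<in>{-T..s}. g' u \<partial>lborel)"
    using a_W12 unfolding inW12_def by blast
  have C0: "C \<ge> 0" using f0_lip unfolding lipschitz_on_def by blast
  have fm: "f0 x y = f0 (max x 0) y" for x y using f0_ext by (cases "x < 0") auto
  have flip: "\<bar>f0 x1 y1 - f0 x2 y2\<bar> \<le> C * (\<bar>x1 - x2\<bar> + \<bar>y1 - y2\<bar>)" for x1 y1 x2 y2
  proof -
    have "dist (f0 (max x1 0) y1) (f0 (max x2 0) y2) \<le> C * dist (max x1 0, y1) (max x2 0, y2)"
      using f0_lip unfolding lipschitz_on_def by (drule_tac conjunct2) (drule_tac x="(max x1 0, y1)" in bspec, auto)
    also have "dist (max x1 0, y1) (max x2 0, y2) \<le> \<bar>max x1 0 - max x2 0\<bar> + \<bar>y1 - y2\<bar>"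
      unfolding dist_Pair_Pair dist_real_def by (rule sqrt_sum_le)
    also have "\<dots> \<le> \<bar>x1 - x2\<bar> + \<bar>y1 - y2\<bar>" by (simp add: max_def abs_if)
    finally have "dist (f0 (max x1 0) y1) (f0 (max x2 0) y2) \<le> C * (\<bar>x1 - x2\<bar> + \<bar>y1 - y2\<bar>)"
      using C0 by (smt (verit, best) mult_left_mono)
    then show ?thesis using fm[of x1 y1] fm[of x2 y2] by (simp add: dist_real_def)
  qed
  have fmono: "f0 x y1 \<le> f0 x y2" if "y1 \<le> y2" for x y1 y2
    using f0_mono that fm[of x y1] fm[of x y2] by (metis max.cobounded2)
  have f00: "f0 0 0 \<ge> 0"
  proof (rule ccontr)
    assume "\<not> f0 0 0 \<ge> 0"
    then have d: "f0 0 0 < 0" by simp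
    define y where "y = - f0 0 0 / (C + 1)"
    have C1: "C + 1 > 0" using C0 by simp
    have y0: "y > 0" unfolding y_def using divide_neg_pos[OF d C1] by simp
    have "f0 0 y \<le> f0 0 0 + C * y" using flip[of 0 y 0 0] y0 by simp
    also have "\<dots> = f0 0 0 / (C + 1)" unfolding y_def using C1 by (simp add: field_simps)
    also have "\<dots> < 0" using d C1 by (rule divide_neg_pos)
    finally show False using f0_pos y0 by auto
  qed
  have "dd T r C a g' f0"
    by unfold_locales (use T_pos r_pos C0 g' a_end a_nonneg flip fmono f00 in auto)
  then show ?thesis by blast
qed


theorem proposition3p6:
  fixes T r \<rho> C_f0 :: real
    and a :: "real \<Rightarrow> real"
    and f0 :: "real \<Rightarrow> real \<Rightarrow> real"
    and U1 U2 :: "real \<Rightarrow> real"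
  assumes T_pos: "T > 0" and r_pos: "r > 0" and rho_pos: "\<rho> > 0"
    and a_W12: "inW12 T a" and a_nonneg: "\<forall>s\<in>{-T..0}. a s \<ge> 0" and a_end: "a (-T) = 0"
    and f0_concave: "concave_on ({0..} \<times> UNIV) (\<lambda>(x, y). f0 x y)"
    and f0_mono: "\<forall>x\<ge>0. \<forall>y1 y2. y1 \<le> y2 \<longrightarrow> f0 x y1 \<le> f0 x y2"
    and f0_lip: "C_f0-lipschitz_on ({0..} \<times> UNIV) (\<lambda>(x, y). f0 x y)"
    and f0_pos: "\<forall>y>0. f0 0 y > 0"
    and f0_ext: "\<forall>x<0. \<forall>y. f0 x y = f0 0 y"
    and U1_cont: "continuous_on {0..} U1"
    and U1_C2: "\<exists>U1' U1''. (\<forall>x>0. (U1 has_real_derivative U1' x) (at x) \<and>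
                                 (U1' has_real_derivative U1'' x) (at x) \<and>
                                 U1' x > 0 \<and> U1'' x < 0) \<and>
                           continuous_on {0<..} U1'' \<and>
                           filterlim U1' at_top (at_right 0)"
    and U1_bdd: "bounded (U1 ` {0..})"
    and U2_cont: "continuous_on {0<..} U2"
    and U2_incr: "strict_mono_on {0<..} U2"
    and U2_concave: "concave_on {0<..} U2"
    and U2_bdd: "bdd_above (U2 ` {0<..})"
    and U2_int: "set_integrable lborel {0..} (\<lambda>t. exp (-\<rho> * t) * U2 (exp (- C_f0 * t)))"
  shows "\<forall>\<eta>\<in>domV T r \<rho> a f0 U1 U2. \<exists>\<epsilon>>0. \<forall>\<zeta>. inH T \<zeta> \<and> norm_m1 T r (Hminus \<zeta> \<eta>) < \<epsilon>
            \<longrightarrow> \<zeta> \<in> domV T r \<rho> a f0 U1 U2"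
proof -
  obtain a' where ddi: "dd T r C_f0 a a' f0"
    using dd_intro[OF T_pos r_pos a_W12 a_nonneg a_end f0_mono f0_lip f0_pos f0_ext] by blast
  interpret dd T r C_f0 a a' f0 by (rule ddi)
  obtain B1 where B1: "\<And>u. u \<ge> 0 \<Longrightarrow> \<bar>U1 u\<bar> \<le> B1"
    using U1_bdd unfolding bounded_iff by auto
  have U2m: "\<And>p q. 0 < p \<Longrightarrow> p \<le> q \<Longrightarrow> U2 p \<le> U2 q"
    by (rule strict_mono_on_leD[OF U2_incr]) auto
  show ?thesis
  proof
    fix \<eta> assume \<eta>: "\<eta> \<in> domV T r \<rho> a f0 U1 U2"
    then have \<eta>H: "inHplus T \<eta>" and V\<eta>: "Vfun T r \<rho> a f0 U1 U2 \<eta> > -\<infinity>" unfolding domV_def by auto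
    have ge: "inL2 T (snd \<eta>)" using \<eta>H unfolding inHplus_def by auto
    have "admissible T r a f0 \<eta> \<noteq> {}"
    proof
      assume "admissible T r a f0 \<eta> = {}"
      then have "Vfun T r \<rho> a f0 U1 U2 \<eta> = -\<infinity>" unfolding Vfun_def by (simp add: bot_ereal_def)
      then show False using V\<eta> by simp
    qed
    then obtain ce where ce: "ce \<in> admissible T r a f0 \<eta>" by blast
    then have Lce: "Lloc_nonneg ce" and pos: "\<forall>t\<ge>0. state T r a f0 \<eta> ce t > 0"
      unfolding admissible_def by auto
    have cce: "cint ce" using Lce unfolding Lloc_nonneg_def cint_def by auto
    have ce0: "\<And>t. t \<ge> 0 \<Longrightarrow> ce t \<ge> 0" using Lce unfolding Lloc_nonneg_def by auto
    define xe where "xe = state T r a f0 \<eta> ce"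
    have st: "is_state T r a f0 \<eta> ce xe" using state_char(1)[OF ge cce] unfolding xe_def .
    then have gxe: "good (snd \<eta>) xe" and fxe: "xe = Phi (snd \<eta>) (fst \<eta>) ce xe"
      using is_state_iff[OF ge cce] by auto
    obtain m where m: "m > 0" "\<And>t. t \<in> {0..T} \<Longrightarrow> xe t \<ge> m"
    proof -
      have "continuous_on {0..T} xe"
        using gxe unfolding good_def by (meson atLeastAtMost_iff atLeast_iff continuous_on_subset subsetI)
      then obtain t0 where t0: "t0 \<in> {0..T}" "\<And>t. t \<in> {0..T} \<Longrightarrow> xe t0 \<le> xe t"
        using continuous_attains_inf[OF compact_Icc _ \<open>continuous_on {0..T} xe\<close>] T_pos by auto
      have "xe t0 > 0" using pos t0(1) unfolding xe_def by auto
      then show ?thesis using that[of "xe t0"] t0 by blast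
    qed
    define E where "E = exp ((Lc + 1) * T)"
    define K where "K = r + (Lc * r + C_f0 * Kd) * E"
    have K0: "K > 0" unfolding K_def E_def using r_pos Lc_pos C_nn Kd_pos
      by (intro add_pos_nonneg mult_nonneg_nonneg) auto
    define \<epsilon> where "\<epsilon> = m / (2 * K)"
    have \<epsilon>0: "\<epsilon> > 0" unfolding \<epsilon>_def using m(1) K0 by simp
    show "\<exists>\<epsilon>>0. \<forall>\<zeta>. inH T \<zeta> \<and> norm_m1 T r (Hminus \<zeta> \<eta>) < \<epsilon> \<longrightarrow> \<zeta> \<in> domV T r \<rho> a f0 U1 U2"
    proof (intro exI[of _ \<epsilon>] conjI allI impI)
      show "\<epsilon> > 0" by (rule \<epsilon>0)
      fix \<zeta> assume \<zeta>: "inH T \<zeta> \<and> norm_m1 T r (Hminus \<zeta> \<eta>) < \<epsilon>"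
      then have gz: "inL2 T (snd \<zeta>)" and nrm: "norm_m1 T r (Hminus \<zeta> \<eta>) < \<epsilon>"
        unfolding inH_def by auto
      define \<delta> where "\<delta> = fst \<zeta> - fst \<eta>"
      define I where "I = (\<integral>v\<in>{-T..0}. (\<delta>/r - (\<integral>u\<in>{v..0}. (snd \<zeta> u - snd \<eta> u) \<partial>lborel))^2 \<partial>lborel)"
      have nrm': "sqrt ((\<delta>/r)^2 + I) < \<epsilon>"
        using nrm unfolding norm_m1_def Hminus_def \<delta>_def I_def by simp
      have I0: "I \<ge> 0" unfolding I_def set_lebesgue_integral_def by simp
      have Dm: "\<bar>\<integral>\<xi>. aI \<xi> * h1 (\<lambda>u. snd \<eta> u - snd \<zeta> u) (s + \<xi>) \<partial>lborel\<bar> \<le> Kd * \<epsilon>" if "s \<in> {0..T}" for s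
        using D_bound[OF ge gz \<epsilon>0 that] nrm' unfolding I_def by blast
      have "\<bar>\<delta> / r\<bar> \<le> sqrt ((\<delta>/r)^2 + I)"
        using I0 real_sqrt_le_mono[of "(\<delta>/r)^2" "(\<delta>/r)^2 + I"] by simp
      then have "\<bar>\<delta>\<bar> / r < \<epsilon>" using nrm' r_pos by simp
      then have \<delta>b: "\<bar>fst \<eta> - fst \<zeta>\<bar> \<le> r * \<epsilon>" unfolding \<delta>_def using r_pos
        by (simp add: field_simps abs_minus_commute)
      have small: "\<bar>fst \<eta> - fst \<zeta>\<bar> + (Lc * \<bar>fst \<eta> - fst \<zeta>\<bar> + C_f0 * (Kd * \<epsilon>)) * exp ((Lc + 1) * T) \<le> m / 2"
      proof -
        have "\<bar>fst \<eta> - fst \<zeta>\<bar> + (Lc * \<bar>fst \<eta> - fst \<zeta>\<bar> + C_f0 * (Kd * \<epsilon>)) * E \<le>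
              r * \<epsilon> + (Lc * (r * \<epsilon>) + C_f0 * (Kd * \<epsilon>)) * E"
          using \<delta>b Lc_pos Kd_pos \<epsilon>0 C_nn by (intro add_mono mult_right_mono mult_left_mono) (auto simp: E_def)
        also have "\<dots> = \<epsilon> * K" unfolding K_def by (simp add: algebra_simps)
        also have "\<dots> = m / 2" unfolding \<epsilon>_def using K0 by simp
        finally show ?thesis unfolding E_def .
      qed
      obtain xz cz where gxz: "good (snd \<zeta>) xz" and fxz: "xz = Phi (snd \<zeta>) (fst \<zeta>) cz xz"
        and ccz: "cint cz" and cz0: "\<forall>t\<ge>0. cz t \<ge> 0" and p1: "\<forall>t\<in>{0..T}. xz t \<ge> m / 2"
        and p2: "xz T \<ge> m / 2" and p3: "\<forall>t\<ge>T. xz t = xz T * exp (- C_f0 * (t - T))"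
        using construct[OF ge gz cce ce0 gxe fxe m Dm small] by blast
      have stz: "is_state T r a f0 \<zeta> cz xz" using is_state_iff[OF gz ccz] gxz fxz by blast
      have sz: "state T r a f0 \<zeta> cz = xz" using state_char(2)[OF gz ccz stz] .
      have xzpos: "xz t > 0" if "t \<ge> 0" for t
      proof (cases "t \<le> T")
        case True then show ?thesis using p1 that m(1) by force
      next
        case False
        then show ?thesis using p3 p2 m(1) by (metis exp_gt_zero less_le_not_le linorder_le_cases mult_pos_pos
              half_gt_zero order_less_le_trans)
      qed
      have z0: "fst \<zeta> > 0"
      proof -
        have "xz 0 = fst \<zeta>" using fun_cong[OF fxz, of 0] Phi_0 by simp
        then show ?thesis using xzpos[of 0] by simp
      qed
      have adm: "cz \<in> admissible T r a f0 \<zeta>"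
        unfolding admissible_def Lloc_nonneg_def using cz0 ccz xzpos sz unfolding cint_def by auto
      have Jf: "(\<integral>\<^sup>+t\<in>{0..}. ennreal (- (exp (-\<rho> * t) * (U1 (cz t) + U2 (xz t)))) \<partial>lborel) < \<infinity>"
      proof -
        have a1: "\<And>t. t \<ge> 0 \<Longrightarrow> cz t \<ge> 0" using cz0 by blast
        have a2: "m / 2 > 0" using m(1) by simp
        have a3: "\<And>t. t \<in> {0..T} \<Longrightarrow> xz t \<ge> m / 2" using p1 by blast
        have a4: "\<And>t. t \<ge> T \<Longrightarrow> xz t = xz T * exp (- C_f0 * (t - T))" using p3 by blast
        show ?thesis by (rule J_fin[OF rho_pos C_nn T_pos B1 U2m U2_int a1 a2 a3 p2 a4])
      qed
      have J: "Jfun T r \<rho> a f0 U1 U2 \<zeta> cz > -\<infinity>"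
      proof -
        define P where "P = (\<integral>\<^sup>+t\<in>{0..}. ennreal (exp (-\<rho> * t) * (U1 (cz t) + U2 (xz t))) \<partial>lborel)"
        define N where "N = (\<integral>\<^sup>+t\<in>{0..}. ennreal (- (exp (-\<rho> * t) * (U1 (cz t) + U2 (xz t)))) \<partial>lborel)"
        have "Jfun T r \<rho> a f0 U1 U2 \<zeta> cz = enn2ereal P - enn2ereal N"
          unfolding Jfun_def Let_def sz P_def N_def ..
        moreover have "N < \<infinity>" using Jf unfolding N_def .
        ultimately show ?thesis
          by (cases "enn2ereal P"; cases "enn2ereal N") (auto simp: enn2ereal_nonneg)
      qed
      have "Jfun T r \<rho> a f0 U1 U2 \<zeta> cz \<le> Vfun T r \<rho> a f0 U1 U2 \<zeta>"
        unfolding Vfun_def by (rule SUP_upper[OF adm])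
      then have "Vfun T r \<rho> a f0 U1 U2 \<zeta> > -\<infinity>" using less_le_trans[OF J] by blast
      then show "\<zeta> \<in> domV T r \<rho> a f0 U1 U2"
        unfolding domV_def inHplus_def using z0 gz by auto
    qed
  qed
qed


end
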